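(* Let $\mathcal{H}$ be a finite-dimensional Hilbert space, let $\mathcal{E}:\mathcal{L}(\mathcal{H})\to\mathcal{L}(\mathcal{H})$ be a quantum channel, and let $\mathcal{C}\subseteq\mathcal{H}$ be a subspace with orthogonal projection $P_{\mathcal{C}}$. Then $\mathcal{C}$ is correctable for $\mathcal{E}$ if and only if there exist probabilities $p_i\ge 0$ with $\sum_i p_i=1$ and unitary operators $U_i$ on $\mathcal{H}$ such that the mixed unitary channel $\mathcal{F}(\rho)=\sum_i p_i U_i\rho U_i^\dagger$ satisfies $\mathcal{E}(\rho)=\mathcal{F}(\rho)$ for all $\rho\in\mathcal{L}(\mathcal{C})$, and $P_{\mathcal{C}}U_i^\dagger U_j P_{\mathcal{C}}=0$ for all $i\neq j$.
   Context: A quantum channel (quantum operation) on $\mathcal{L}(\mathcal{H})$ is a completely positive trace-preserving linear map; it has a Kraus representation $\mathcal{E}(\rho)=\sum_i E_i\rho E_i^\dagger$ with $\sum_i E_i^\dagger E_i=I$, written $\mathcal{E}\equiv\{E_i\}$. $\mathcal{L}(\mathcal{C})$ is identified with the operators $\rho$ on $\mathcal{H}$ with $\rho=P_{\mathcal{C}}\rho P_{\mathcal{C}}$. Write $\mathcal{P}_{\mathcal{C}}(\rho)=P_{\mathcal{C}}\rho P_{\mathcal{C}}$. A subspace $\mathcal{C}$ is correctable for $\mathcal{E}$ if there is a quantum channel $\mathcal{R}$ on $\mathcal{L}(\mathcal{H})$ with $\mathcal{R}\circ\mathcal{E}\circ\mathcal{P}_{\mathcal{C}}=\mathcal{P}_{\mathcal{C}}$.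 *)

theory Defs
  imports "Jordan_Normal_Form.Matrix"
begin

text \<open>The Hilbert space H is C^n (n = dim H); operators on H are n x n complex
  matrices (carrier_mat n n). Maps on L(H) are functions complex mat => complex mat,
  of which only the behaviour on carrier_mat n n matters.\<close>

definition adj :: "complex mat \<Rightarrow> complex mat" where
  "adj A = mat (dim_col A) (dim_row A) (\<lambda>(i,j). cnj (A $$ (j,i)))"

definition mtrace :: "complex mat \<Rightarrow> complex" where
  "mtrace A = (\<Sum>i<dim_row A. A $$ (i,i))"

definition psd :: "nat \<Rightarrow> complex mat \<Rightarrow> bool" where
  "psd n A \<longleftrightarrow> A \<in> carrier_mat n n \<and> adj A = A \<and>
     (\<forall>v \<in> carrier_vec n.
        let q = (\<Sum>i<n. \<Sum>j<n. cnj (v $ i) * A $$ (i,j) * v $ j) in Im q = 0 \<and> 0 \<le> Re q)"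

definition lin_map :: "nat \<Rightarrow> (complex mat \<Rightarrow> complex mat) \<Rightarrow> bool" where
  "lin_map n E \<longleftrightarrow> (\<forall>A \<in> carrier_mat n n. E A \<in> carrier_mat n n) \<and>
     (\<forall>A \<in> carrier_mat n n. \<forall>B \<in> carrier_mat n n. E (A + B) = E A + E B) \<and>
     (\<forall>A \<in> carrier_mat n n. \<forall>c. E (c \<cdot>\<^sub>m A) = c \<cdot>\<^sub>m E A)"

text \<open>The map id_k \<otimes> E on L(C^k \<otimes> C^n), acting blockwise on (k*n) x (k*n) matrices.\<close>
definition lift :: "nat \<Rightarrow> nat \<Rightarrow> (complex mat \<Rightarrow> complex mat) \<Rightarrow> complex mat \<Rightarrow> complex mat" where
  "lift k n E M = mat (k*n) (k*n) (\<lambda>(i,j).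
     E (mat n n (\<lambda>(a,b). M $$ ((i div n) * n + a, (j div n) * n + b))) $$ (i mod n, j mod n))"

definition completely_positive :: "nat \<Rightarrow> (complex mat \<Rightarrow> complex mat) \<Rightarrow> bool" where
  "completely_positive n E \<longleftrightarrow> (\<forall>k M. psd (k*n) M \<longrightarrow> psd (k*n) (lift k n E M))"

definition trace_preserving :: "nat \<Rightarrow> (complex mat \<Rightarrow> complex mat) \<Rightarrow> bool" where
  "trace_preserving n E \<longleftrightarrow> (\<forall>A \<in> carrier_mat n n. mtrace (E A) = mtrace A)"

definition quantum_channel :: "nat \<Rightarrow> (complex mat \<Rightarrow> complex mat) \<Rightarrow> bool" where
  "quantum_channel n E \<longleftrightarrow> lin_map n E \<and> completely_positive n E \<and> trace_preserving n E"

definition unitary_mat :: "nat \<Rightarrow> complex mat \<Rightarrow> bool" where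
  "unitary_mat n U \<longleftrightarrow> U \<in> carrier_mat n n \<and> adj U * U = 1\<^sub>m n"

definition orth_proj :: "nat \<Rightarrow> complex mat \<Rightarrow> bool" where
  "orth_proj n P \<longleftrightarrow> P \<in> carrier_mat n n \<and> P * P = P \<and> adj P = P"

definition correctable :: "nat \<Rightarrow> (complex mat \<Rightarrow> complex mat) \<Rightarrow> complex mat \<Rightarrow> bool" where
  "correctable n E P \<longleftrightarrow> (\<exists>R. quantum_channel n R \<and>
     (\<forall>\<rho> \<in> carrier_mat n n. R (E (P * \<rho> * P)) = P * \<rho> * P))"

definition mixed_unitary :: "nat \<Rightarrow> nat \<Rightarrow> (nat \<Rightarrow> real) \<Rightarrow> (nat \<Rightarrow> complex mat) \<Rightarrow> complex mat \<Rightarrow> complex mat" where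
  "mixed_unitary n m p U \<rho> = mat n n (\<lambda>(a,b).
     \<Sum>i<m. complex_of_real (p i) * (U i * \<rho> * adj (U i)) $$ (a,b))"

end

theory Submission
  imports Defs "Jordan_Normal_Form.Spectral_Radius"
begin


definition ipn :: "nat \<Rightarrow> (nat \<Rightarrow> complex) \<Rightarrow> (nat \<Rightarrow> complex) \<Rightarrow> complex" where
  "ipn n u v = (\<Sum>a<n. cnj (u a) * v a)"

definition ortho :: "nat \<Rightarrow> 'i set \<Rightarrow> ('i \<Rightarrow> nat \<Rightarrow> complex) \<Rightarrow> bool" where
  "ortho n S f \<longleftrightarrow> (\<forall>i\<in>S. \<forall>j\<in>S. ipn n (f i) (f j) = (if i = j then 1 else 0))"

lemma ipn_cnj: "ipn n v u = cnj (ipn n u v)"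
  unfolding ipn_def by (simp add: mult.commute)

lemma ipn_self_real: "ipn n u u = of_real (\<Sum>a<n. (cmod (u a))^2)"
  unfolding ipn_def of_real_sum
  by (rule sum.cong) (auto simp: mult.commute complex_norm_square simp del: of_real_power)

lemma ipn_self_ge0: "Re (ipn n u u) \<ge> 0" "Im (ipn n u u) = 0"
  unfolding ipn_self_real by (auto intro: sum_nonneg)

lemma ipn_self_zero: assumes "ipn n u u = 0" "a < n" shows "u a = 0"
proof -
  have "(\<Sum>a<n. (cmod (u a))^2) = 0" using assms(1) unfolding ipn_self_real by (simp only: of_real_eq_0_iff)
  then have "(cmod (u a))^2 = 0"
    using sum_nonneg_eq_0_iff[of "{..<n}" "\<lambda>a. (cmod (u a))^2"] assms(2) by auto
  then show ?thesis by simp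
qed

definition resid :: "'i set \<Rightarrow> ('i \<Rightarrow> nat \<Rightarrow> complex) \<Rightarrow> nat \<Rightarrow> nat \<Rightarrow> complex" where
  "resid S f j = (\<lambda>a. (if a = j then 1 else 0) - (\<Sum>i\<in>S. cnj (f i j) * f i a))"

lemma resid_props:
  assumes o: "ortho n S f" and fin: "finite S"
  shows "\<And>k j. k \<in> S \<Longrightarrow> j < n \<Longrightarrow> ipn n (f k) (resid S f j) = 0"
    and "\<And>j. j < n \<Longrightarrow> ipn n (resid S f j) (resid S f j) = cnj (resid S f j j)"
    and "(\<Sum>j<n. cnj (resid S f j j)) = of_nat n - of_nat (card S)"
proof -
  define g where "g = resid S f"
  note g_def' = g_def[unfolded resid_def]
  have gl: "ipn n u (g j) = cnj (u j) - (\<Sum>i\<in>S. cnj (f i j) * ipn n u (f i))" if j: "j < n" for u j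
  proof -
    have "ipn n u (g j) = (\<Sum>a<n. cnj (u a) * (if a = j then 1 else 0))
       - (\<Sum>a<n. \<Sum>i\<in>S. cnj (f i j) * (cnj (u a) * f i a))"
      unfolding ipn_def g_def' by (simp add: algebra_simps sum_subtractf sum_distrib_left)
    also have "(\<Sum>a<n. cnj (u a) * (if a = j then 1 else 0)) = cnj (u j)"
      using j by (simp add: if_distrib cong: if_cong)
    also have "(\<Sum>a<n. \<Sum>i\<in>S. cnj (f i j) * (cnj (u a) * f i a))
        = (\<Sum>i\<in>S. cnj (f i j) * ipn n u (f i))"
      unfolding ipn_def by (subst sum.swap) (simp add: sum_distrib_left)
    finally show ?thesis .
  qed
  have orth: "ipn n (f k) (g j) = 0" if k: "k \<in> S" and j: "j < n" for k j
  proof -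
    have "(\<Sum>i\<in>S. cnj (f i j) * ipn n (f k) (f i)) = (\<Sum>i\<in>S. if i = k then cnj (f i j) else 0)"
      using o k unfolding ortho_def by (intro sum.cong) auto
    also have "\<dots> = cnj (f k j)" using k fin by simp
    finally show ?thesis using gl[OF j, of "f k"] by simp
  qed
  then show "\<And>k j. k \<in> S \<Longrightarrow> j < n \<Longrightarrow> ipn n (f k) (resid S f j) = 0" unfolding g_def .
  have gg: "ipn n (g j) (g j) = cnj (g j j)" if j: "j < n" for j
  proof -
    have "(\<Sum>i\<in>S. cnj (f i j) * ipn n (g j) (f i)) = 0"
      using orth j by (intro sum.neutral) (simp add: ipn_cnj[of n "g j"])
    then show ?thesis using gl[OF j, of "g j"] by simp
  qed
  then show "\<And>j. j < n \<Longrightarrow> ipn n (resid S f j) (resid S f j) = cnj (resid S f j j)"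
    unfolding g_def .
  have "(\<Sum>j<n. cnj (g j j)) = (\<Sum>j<n. 1 - (\<Sum>i\<in>S. f i j * cnj (f i j)))"
    unfolding g_def' by simp
  also have "\<dots> = of_nat n - (\<Sum>i\<in>S. ipn n (f i) (f i))"
    unfolding ipn_def by (simp add: sum_subtractf sum.swap[of _ S] mult.commute)
  also have "(\<Sum>i\<in>S. ipn n (f i) (f i)) = of_nat (card S)"
    using o unfolding ortho_def by simp
  finally show "(\<Sum>j<n. cnj (resid S f j j)) = of_nat n - of_nat (card S)" unfolding g_def .
qed

lemma ortho_card_le:
  assumes o: "ortho n S f" and fin: "finite S"
  shows "card S \<le> n"
proof -
  have "(\<Sum>j<n. Re (cnj (resid S f j j))) \<ge> 0"
    using resid_props(2)[OF o fin] ipn_self_ge0(1) by (intro sum_nonneg) (metis lessThan_iff)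
  moreover have "(\<Sum>j<n. Re (cnj (resid S f j j))) = real n - real (card S)"
    using arg_cong[OF resid_props(3)[OF o fin], of Re] by (simp add: Re_sum)
  ultimately show ?thesis by simp
qed

lemma ortho_complete:
  assumes o: "ortho n S f" and fin: "finite S" and c: "card S = n"
    and a: "a < n" and j: "j < n"
  shows "(\<Sum>i\<in>S. f i a * cnj (f i j)) = (if a = j then 1 else 0)"
proof -
  have "(\<Sum>j<n. Re (cnj (resid S f j j))) = 0"
    using arg_cong[OF resid_props(3)[OF o fin], of Re] c by (simp add: Re_sum)
  moreover have "\<forall>j\<in>{..<n}. Re (cnj (resid S f j j)) \<ge> 0"
    using resid_props(2)[OF o fin] ipn_self_ge0(1) by (metis lessThan_iff)
  ultimately have "Re (cnj (resid S f j j)) = 0"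
    using sum_nonneg_eq_0_iff[of "{..<n}" "\<lambda>j. Re (cnj (resid S f j j))"] j by auto
  moreover have "Im (cnj (resid S f j j)) = 0"
    using resid_props(2)[OF o fin j] ipn_self_ge0[of n "resid S f j"] by simp
  ultimately have "ipn n (resid S f j) (resid S f j) = 0"
    using resid_props(2)[OF o fin j] by (simp add: complex_eq_iff)
  then have "resid S f j a = 0" using ipn_self_zero a by blast
  then have "(if a = j then 1 else 0) = (\<Sum>i\<in>S. cnj (f i j) * f i a)"
    unfolding resid_def by simp
  then show ?thesis by (simp add: mult.commute)
qed

lemma ext1:
  assumes o: "ortho n S f" and fin: "finite S" and c: "card S < n"
  shows "\<exists>g. ipn n g g = 1 \<and> (\<forall>i\<in>S. ipn n (f i) g = 0)"
proof -
  define g where "g = resid S f"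
  note orth = resid_props(1)[OF o fin, folded g_def]
  note gg = resid_props(2)[OF o fin, folded g_def]
  have "(\<Sum>j<n. cnj (g j j)) = of_nat n - of_nat (card S)"
    using resid_props(3)[OF o fin] unfolding g_def .
  then have "(\<Sum>j<n. cnj (g j j)) \<noteq> 0" using c by simp
  then obtain j where j: "j < n" and nz: "cnj (g j j) \<noteq> 0"
    by (meson sum.neutral lessThan_iff)
  then have nz': "ipn n (g j) (g j) \<noteq> 0" using gg by simp
  define r where "r = Re (ipn n (g j) (g j))"
  have r: "ipn n (g j) (g j) = of_real r" "r > 0"
    using ipn_self_ge0[of n "g j"] nz' unfolding r_def
    by (auto simp: complex_eq_iff less_eq_real_def)
  define h where "h = (\<lambda>a. of_real (1 / sqrt r) * g j a)"
  have "ipn n h h = of_real (1 / sqrt r) * of_real (1 / sqrt r) * ipn n (g j) (g j)"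
    unfolding ipn_def h_def by (simp add: sum_distrib_left algebra_simps)
  also have "\<dots> = 1" using r by (simp add: of_real_mult[symmetric] del: of_real_mult)
  finally have "ipn n h h = 1" .
  moreover have "ipn n (f i) h = 0" if "i \<in> S" for i
  proof -
    have "ipn n (f i) h = of_real (1 / sqrt r) * ipn n (f i) (g j)"
      unfolding ipn_def h_def by (simp add: sum_distrib_left algebra_simps)
    then show ?thesis using orth[OF that j] by simp
  qed
  ultimately show ?thesis by blast
qed


lemma ortho_extend_aux:
  assumes o: "ortho n S f" and finS: "finite S" and finD: "finite D"
  shows "D \<inter> S = {} \<Longrightarrow> card (S \<union> D) \<le> n \<Longrightarrow> \<exists>g. ortho n (S \<union> D) g \<and> (\<forall>i\<in>S. g i = f i)"
  using finD
proof (induction D rule: finite_induct)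
  case empty
  then show ?case using o by auto
next
  case (insert x D)
  have xn: "x \<notin> S \<union> D" using insert by auto
  have cardD: "card (S \<union> insert x D) = Suc (card (S \<union> D))"
    using xn finS insert(1) by simp
  then obtain g where g: "ortho n (S \<union> D) g" "\<forall>i\<in>S. g i = f i"
    using insert by auto
  have "card (S \<union> D) < n" using cardD insert by simp
  then obtain h where h: "ipn n h h = 1" "\<forall>i\<in>S \<union> D. ipn n (g i) h = 0"
    using ext1[OF g(1)] finS insert(1) by blast
  define g' where "g' = g(x := h)"
  have "ortho n (S \<union> insert x D) g'"
    unfolding ortho_def
  proof (intro ballI)
    fix i j assume i: "i \<in> S \<union> insert x D" and j: "j \<in> S \<union> insert x D"
    show "ipn n (g' i) (g' j) = (if i = j then 1 else 0)"
    proof (cases "i = x"; cases "j = x")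
      assume "i = x" "j = x" then show ?thesis using h unfolding g'_def by simp
    next
      assume "i = x" "j \<noteq> x" then show ?thesis using h j xn ipn_cnj[of n h "g j"] unfolding g'_def
        by auto
    next
      assume "i \<noteq> x" "j = x" then show ?thesis using h i xn unfolding g'_def by auto
    next
      assume "i \<noteq> x" "j \<noteq> x" then show ?thesis using g(1) i j unfolding g'_def ortho_def by auto
    qed
  qed
  moreover have "\<forall>i\<in>S. g' i = f i" using g(2) xn unfolding g'_def by auto
  ultimately show ?case by blast
qed

lemma ortho_extend:
  assumes o: "ortho n S f" and finT: "finite T" and ST: "S \<subseteq> T" and c: "card T \<le> n"
  shows "\<exists>g. ortho n T g \<and> (\<forall>i\<in>S. g i = f i)"
proof -
  have finS: "finite S" using ST finT finite_subset by blast
  have "S \<union> (T - S) = T" using ST by auto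
  then show ?thesis
    using ortho_extend_aux[OF o finS, of "T - S"] finT c by auto
qed

lemma ortho_expand:
  assumes o: "ortho n S f" and fin: "finite S" and c: "card S = n" and a: "a < n"
  shows "(\<Sum>i\<in>S. ipn n (f i) v * f i a) = v a"
proof -
  have "(\<Sum>i\<in>S. ipn n (f i) v * f i a) = (\<Sum>i\<in>S. \<Sum>b<n. v b * (f i a * cnj (f i b)))"
    unfolding ipn_def by (simp add: sum_distrib_left sum_distrib_right algebra_simps)
  also have "\<dots> = (\<Sum>b<n. \<Sum>i\<in>S. v b * (f i a * cnj (f i b)))" by (rule sum.swap)
  also have "\<dots> = (\<Sum>b<n. v b * (\<Sum>i\<in>S. f i a * cnj (f i b)))"
    by (simp add: sum_distrib_left)
  also have "\<dots> = (\<Sum>b<n. v b * (if a = b then 1 else 0))"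
    using ortho_complete[OF o fin c a] by simp
  also have "\<dots> = v a" using a by (simp add: if_distrib cong: if_cong)
  finally show ?thesis .
qed




definition mv :: "complex mat \<Rightarrow> (nat \<Rightarrow> complex) \<Rightarrow> nat \<Rightarrow> complex" where
  "mv H v = (\<lambda>a. \<Sum>b<dim_col H. H $$ (a,b) * v b)"

lemma sum_split_at: fixes r n :: nat
  assumes "r \<le> n"
  shows "(\<Sum>i<n. F i) = (\<Sum>i<r. F i) + (\<Sum>i<n-r. F (r+i))"
proof -
  have "{..<n} = {..<r} \<union> {r..<n}" using ivl_disj_un_one(2)[OF assms] by simp
  then have "(\<Sum>i<n. F i) = (\<Sum>i<r. F i) + (\<Sum>i\<in>{r..<n}. F i)"
    by (simp add: sum.union_disjoint ivl_disj_int)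
  moreover have "(\<Sum>i<n-r. F (r+i)) = (\<Sum>i\<in>{r..<n}. F i)"
    by (rule sum.reindex_bij_witness[of _ "\<lambda>i. i - r" "\<lambda>i. r + i"]) auto
  ultimately show ?thesis by simp
qed

lemma adj_carrier[simp]: "A \<in> carrier_mat n m \<Longrightarrow> adj A \<in> carrier_mat m n"
  unfolding adj_def by auto

lemma adj_dims[simp]: "dim_row (adj A) = dim_col A" "dim_col (adj A) = dim_row A"
  unfolding adj_def by auto

lemma adj_index[simp]: "i < dim_col A \<Longrightarrow> j < dim_row A \<Longrightarrow> adj A $$ (i,j) = cnj (A $$ (j,i))"
  unfolding adj_def by auto

lemma herm_entry:
  assumes "A \<in> carrier_mat n n" "adj A = A" "a < n" "b < n"
  shows "A $$ (b,a) = cnj (A $$ (a,b))"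
  using adj_index[of b A a] assms by (auto simp: carrier_matD)

lemma ipn_lin2: "ipn n u (\<lambda>a. \<Sum>j\<in>J. c j * w j a) = (\<Sum>j\<in>J. c j * ipn n u (w j))"
  unfolding ipn_def by (simp add: sum_distrib_left algebra_simps) (rule sum.swap)

lemma ipn_lin1: "ipn n (\<lambda>a. \<Sum>j\<in>J. c j * w j a) v = (\<Sum>j\<in>J. cnj (c j) * ipn n (w j) v)"
  unfolding ipn_def by (simp add: sum_distrib_left sum_distrib_right algebra_simps) (rule sum.swap)

lemma ipn_scale1: "ipn n (\<lambda>a. c * w a) v = cnj c * ipn n w v"
  unfolding ipn_def by (simp add: sum_distrib_left algebra_simps)

lemma ipn_scale2: "ipn n u (\<lambda>a. c * w a) = c * ipn n u w"
  unfolding ipn_def by (simp add: sum_distrib_left algebra_simps)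

lemma mv_lin: "H \<in> carrier_mat n n \<Longrightarrow> mv H (\<lambda>b. \<Sum>j\<in>J. c j * w j b) a = (\<Sum>j\<in>J. c j * mv H (w j) a)"
  unfolding mv_def by (simp add: sum_distrib_left algebra_simps) (rule sum.swap)

lemma ipn_herm:
  assumes "H \<in> carrier_mat n n" "adj H = H"
  shows "ipn n u (mv H v) = ipn n (mv H u) v"
proof -
  have "ipn n u (mv H v) = (\<Sum>a<n. \<Sum>b<n. cnj (u a) * H $$ (a,b) * v b)"
    unfolding ipn_def mv_def using assms by (simp add: sum_distrib_left algebra_simps)
  also have "\<dots> = (\<Sum>b<n. \<Sum>a<n. cnj (u a) * H $$ (a,b) * v b)" by (rule sum.swap)
  also have "\<dots> = ipn n (mv H u) v"
  proof -
    have h: "cnj (H $$ (b,a)) = H $$ (a,b)" if "a < n" "b < n" for a b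
      using herm_entry[OF assms that] by simp
    show ?thesis
      unfolding ipn_def mv_def using assms h
      by (auto simp: sum_distrib_right sum_distrib_left algebra_simps intro!: sum.cong)
  qed
  finally show ?thesis .
qed


lemma ipn_cong1: "(\<And>a. a < n \<Longrightarrow> u a = u' a) \<Longrightarrow> ipn n u v = ipn n u' v"
  unfolding ipn_def by simp

lemma ipn_cong2: "(\<And>a. a < n \<Longrightarrow> v a = v' a) \<Longrightarrow> ipn n u v = ipn n u v'"
  unfolding ipn_def by simp

lemma normalize_vec:
  assumes "ipn n y y \<noteq> 0"
  shows "\<exists>c. c \<noteq> 0 \<and> ipn n (\<lambda>a. c * y a) (\<lambda>a. c * y a) = 1"
proof -
  define r where "r = Re (ipn n y y)"
  have r: "ipn n y y = of_real r" "r > 0"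
    using ipn_self_ge0[of n y] assms unfolding r_def
    by (auto simp: complex_eq_iff less_eq_real_def)
  have "ipn n (\<lambda>a. of_real (1 / sqrt r) * y a) (\<lambda>a. of_real (1 / sqrt r) * y a)
     = of_real (1 / sqrt r) * of_real (1 / sqrt r) * ipn n y y"
    unfolding ipn_def by (simp add: sum_distrib_left algebra_simps)
  also have "\<dots> = 1" using r by (simp add: of_real_mult[symmetric] del: of_real_mult)
  finally show ?thesis using r by (intro exI[of _ "of_real (1 / sqrt r)"]) auto
qed

lemma spectral_step:
  assumes H: "H \<in> carrier_mat n n" "adj H = H" and o: "ortho n {..<r} f" and rn: "r < n"
    and eig: "\<forall>i<r. \<forall>a<n. mv H (f i) a = of_real (\<mu> i) * f i a"
  shows "\<exists>y m. ipn n y y = 1 \<and> (\<forall>i<r. ipn n (f i) y = 0) \<and> (\<forall>a<n. mv H y a = of_real m * y a)"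
proof -
  obtain g where g: "ortho n {..<n} g" "\<forall>i\<in>{..<r}. g i = f i"
    using ortho_extend[OF o, of "{..<n}"] rn by auto
  have gg: "ipn n (g i) (g j) = (if i = j then 1 else 0)" if "i < n" "j < n" for i j
    using g(1) that unfolding ortho_def by auto
  define K where "K = mat (n-r) (n-r) (\<lambda>(i,j). ipn n (g (r+i)) (mv H (g (r+j))))"
  have K: "K \<in> carrier_mat (n-r) (n-r)" unfolding K_def by simp
  from spectrum_non_empty[OF K] rn obtain m where "m \<in> spectrum K" by auto
  then obtain z where z: "eigenvector K z m" unfolding spectrum_def eigenvalue_def by auto
  then have zc: "z \<in> carrier_vec (n-r)" and z0: "z \<noteq> 0\<^sub>v (n-r)" and Kz: "K *\<^sub>v z = m \<cdot>\<^sub>v z"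
    unfolding eigenvector_def using K by auto
  have Kz': "(\<Sum>j<n-r. K $$ (i,j) * z $ j) = m * z $ i" if i: "i < n - r" for i
  proof -
    have "(K *\<^sub>v z) $ i = m * z $ i" using Kz i zc by simp
    then show ?thesis using i K zc by (simp add: scalar_prod_def atLeast0LessThan)
  qed
  define y where "y = (\<lambda>a. \<Sum>j<n-r. z $ j * g (r+j) a)"
  have Hg: "mv H (g (r+j)) a = (\<Sum>i<n-r. K $$ (i,j) * g (r+i) a)" if j: "j < n-r" and a: "a < n" for j a
  proof -
    have "mv H (g (r+j)) a = (\<Sum>i<n. ipn n (g i) (mv H (g (r+j))) * g i a)"
      using ortho_expand[OF g(1) _ _ a] by simp
    also have "\<dots> = (\<Sum>i<r. ipn n (g i) (mv H (g (r+j))) * g i a)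
        + (\<Sum>i<n-r. ipn n (g (r+i)) (mv H (g (r+j))) * g (r+i) a)"
      using sum_split_at[of r n] rn by simp
    also have "(\<Sum>i<r. ipn n (g i) (mv H (g (r+j))) * g i a) = 0"
    proof (intro sum.neutral ballI)
      fix i assume i: "i \<in> {..<r}"
      have "ipn n (g i) (mv H (g (r+j))) = ipn n (mv H (g i)) (g (r+j))"
        using ipn_herm[OF H] by simp
      also have "\<dots> = ipn n (\<lambda>a. of_real (\<mu> i) * g i a) (g (r+j))"
        using eig g(2) i by (intro ipn_cong1) auto
      also have "\<dots> = 0" using gg[of i "r+j"] i j rn by (simp add: ipn_scale1)
      finally show "ipn n (g i) (mv H (g (r+j))) * g i a = 0" by simp
    qed
    finally show ?thesis unfolding K_def using j by simp
  qed
  have Hy: "mv H y a = m * y a" if a: "a < n" for a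
  proof -
    have "mv H y a = (\<Sum>j<n-r. z $ j * mv H (g (r+j)) a)"
      unfolding y_def using mv_lin[OF H(1), where c="\<lambda>j. z $ j" and w="\<lambda>j. g (r+j)" and J="{..<n-r}"] by simp
    also have "\<dots> = (\<Sum>j<n-r. \<Sum>i<n-r. z $ j * (K $$ (i,j) * g (r+i) a))"
      using Hg a by (simp add: sum_distrib_left)
    also have "\<dots> = (\<Sum>i<n-r. \<Sum>j<n-r. z $ j * (K $$ (i,j) * g (r+i) a))" by (rule sum.swap)
    also have "\<dots> = (\<Sum>i<n-r. (\<Sum>j<n-r. K $$ (i,j) * z $ j) * g (r+i) a)"
      by (intro sum.cong refl) (simp add: sum_distrib_left ac_simps)
    also have "\<dots> = (\<Sum>i<n-r. m * z $ i * g (r+i) a)" using Kz' by simp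
    also have "\<dots> = m * y a" unfolding y_def by (simp add: sum_distrib_left algebra_simps)
    finally show ?thesis .
  qed
  have orth: "ipn n (f k) y = 0" if k: "k < r" for k
  proof -
    have "ipn n (f k) y = (\<Sum>j<n-r. z $ j * ipn n (g k) (g (r+j)))"
      unfolding y_def ipn_lin2 using g(2) k by simp
    also have "\<dots> = 0" using gg k rn by (intro sum.neutral) auto
    finally show ?thesis .
  qed
  have yy: "ipn n y y = ipn (n-r) (\<lambda>j. z $ j) (\<lambda>j. z $ j)"
  proof -
    have "ipn n y y = (\<Sum>j<n-r. cnj (z $ j) * (\<Sum>j'<n-r. z $ j' * ipn n (g (r+j)) (g (r+j'))))"
      unfolding y_def ipn_lin1 ipn_lin2 by simp
    also have "\<dots> = (\<Sum>j<n-r. cnj (z $ j) * z $ j)"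
    proof (intro sum.cong refl)
      fix j assume j: "j \<in> {..<n-r}"
      have "(\<Sum>j'<n-r. z $ j' * ipn n (g (r+j)) (g (r+j'))) = (\<Sum>j'<n-r. if j' = j then z $ j' else 0)"
        using gg j by (intro sum.cong) auto
      also have "\<dots> = z $ j" using j by simp
      finally show "cnj (z $ j) * (\<Sum>j'<n-r. z $ j' * ipn n (g (r+j)) (g (r+j'))) = cnj (z $ j) * z $ j"
        by simp
    qed
    finally show ?thesis unfolding ipn_def .
  qed
  have "\<exists>j<n-r. z $ j \<noteq> 0"
  proof (rule ccontr)
    assume "\<not> ?thesis"
    then have "z = 0\<^sub>v (n-r)" using zc by (intro eq_vecI) auto
    then show False using z0 by simp
  qed
  then have ny: "ipn n y y \<noteq> 0" unfolding yy using ipn_self_zero by blast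
  have mreal: "m = of_real (Re m)"
  proof -
    have "ipn n y (mv H y) = ipn n (mv H y) y" using ipn_herm[OF H] .
    moreover have "ipn n y (mv H y) = m * ipn n y y"
      using Hy by (subst ipn_cong2[of n _ "\<lambda>a. m * y a"]) (auto simp: ipn_scale2)
    moreover have "ipn n (mv H y) y = cnj m * ipn n y y"
      using Hy by (subst ipn_cong1[of n _ "\<lambda>a. m * y a"]) (auto simp: ipn_scale1)
    ultimately have "m = cnj m" using ny by simp
    then show ?thesis by (simp add: complex_eq_iff)
  qed
  obtain c where c: "c \<noteq> 0" "ipn n (\<lambda>a. c * y a) (\<lambda>a. c * y a) = 1"
    using normalize_vec[OF ny] by blast
  show ?thesis
  proof (intro exI conjI allI impI)
    show "ipn n (\<lambda>a. c * y a) (\<lambda>a. c * y a) = 1" by fact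
    show "ipn n (f i) (\<lambda>a. c * y a) = 0" if "i < r" for i using orth[OF that] by (simp add: ipn_scale2)
    show "mv H (\<lambda>a. c * y a) a = of_real (Re m) * (c * y a)" if "a < n" for a
    proof -
      have "mv H (\<lambda>a. c * y a) a = c * mv H y a" unfolding mv_def by (simp add: sum_distrib_left algebra_simps)
      then show ?thesis using Hy[OF that] mreal by (simp add: algebra_simps)
    qed
  qed
qed


lemma spectral_aux:
  assumes H: "H \<in> carrier_mat n n" "adj H = H"
  shows "r \<le> n \<Longrightarrow> \<exists>f \<mu>. ortho n {..<r} f \<and> (\<forall>i<r. \<forall>a<n. mv H (f i) a = of_real (\<mu> i) * f i a)"
proof (induction r)
  case 0
  then show ?case by (auto simp: ortho_def)
next
  case (Suc r)
  then obtain f \<mu> where f: "ortho n {..<r} f" "\<forall>i<r. \<forall>a<n. mv H (f i) a = of_real (\<mu> i) * f i a"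
    by auto
  obtain y m where y: "ipn n y y = 1" "\<forall>i<r. ipn n (f i) y = 0" "\<forall>a<n. mv H y a = of_real m * y a"
    using spectral_step[OF H f(1) _ f(2)] Suc(2) by auto
  define f' where "f' = f(r := y)"
  define \<mu>' where "\<mu>' = \<mu>(r := m)"
  have "ortho n {..<Suc r} f'"
    unfolding ortho_def
  proof (intro ballI)
    fix i j assume i: "i \<in> {..<Suc r}" and j: "j \<in> {..<Suc r}"
    show "ipn n (f' i) (f' j) = (if i = j then 1 else 0)"
    proof (cases "i = r"; cases "j = r")
      assume "i = r" "j = r" then show ?thesis using y unfolding f'_def by simp
    next
      assume a: "i = r" "j \<noteq> r"
      then have "ipn n y (f j) = cnj (ipn n (f j) y)" by (rule_tac ipn_cnj)
      then show ?thesis using y j a unfolding f'_def by auto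
    next
      assume "i \<noteq> r" "j = r" then show ?thesis using y i unfolding f'_def by auto
    next
      assume "i \<noteq> r" "j \<noteq> r" then show ?thesis using f(1) i j unfolding f'_def ortho_def by auto
    qed
  qed
  moreover have "\<forall>i<Suc r. \<forall>a<n. mv H (f' i) a = of_real (\<mu>' i) * f' i a"
    using f(2) y(3) unfolding f'_def \<mu>'_def by (auto simp: less_Suc_eq)
  ultimately show ?case by blast
qed

lemma spectral:
  assumes H: "H \<in> carrier_mat n n" "adj H = H"
  shows "\<exists>f \<mu>. ortho n {..<n} f \<and> (\<forall>i<n. \<forall>a<n. mv H (f i) a = of_real (\<mu> i) * f i a)
     \<and> (\<forall>a<n. \<forall>b<n. H $$ (a,b) = (\<Sum>i<n. of_real (\<mu> i) * f i a * cnj (f i b)))"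
proof -
  obtain f \<mu> where f: "ortho n {..<n} f" "\<forall>i<n. \<forall>a<n. mv H (f i) a = of_real (\<mu> i) * f i a"
    using spectral_aux[OF H, of n] by auto
  have "H $$ (a,b) = (\<Sum>i<n. of_real (\<mu> i) * f i a * cnj (f i b))" if a: "a < n" and b: "b < n" for a b
  proof -
    have "H $$ (a,b) = (\<Sum>i<n. ipn n (f i) (\<lambda>c. H $$ (c,b)) * f i a)"
      using ortho_expand[OF f(1) _ _ a, of "\<lambda>c. H $$ (c,b)"] by simp
    also have "\<dots> = (\<Sum>i<n. of_real (\<mu> i) * f i a * cnj (f i b))"
    proof (intro sum.cong refl)
      fix i assume i: "i \<in> {..<n}"
      have "ipn n (f i) (\<lambda>c. H $$ (c,b)) = cnj (mv H (f i) b)"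
        unfolding ipn_def mv_def using H herm_entry[OF H _ b]
        by (simp add: mult.commute)
      also have "\<dots> = of_real (\<mu> i) * cnj (f i b)" using f(2) i b by simp
      finally show "ipn n (f i) (\<lambda>c. H $$ (c,b)) * f i a = of_real (\<mu> i) * f i a * cnj (f i b)"
        by simp
    qed
    finally show ?thesis .
  qed
  then show ?thesis using f by blast
qed

lemma psd_qf:
  assumes "psd n H"
  shows "Re (ipn n v (mv H v)) \<ge> 0 \<and> Im (ipn n v (mv H v)) = 0"
proof -
  have H: "H \<in> carrier_mat n n" using assms unfolding psd_def by auto
  let ?v = "vec n v"
  have all: "\<forall>v\<in>carrier_vec n. let q = (\<Sum>i<n. \<Sum>j<n. cnj (v $ i) * H $$ (i,j) * v $ j) in Im q = 0 \<and> 0 \<le> Re q"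
    using assms unfolding psd_def by blast
  have "let q = (\<Sum>i<n. \<Sum>j<n. cnj (?v $ i) * H $$ (i,j) * ?v $ j) in Im q = 0 \<and> 0 \<le> Re q"
    by (rule bspec[OF all]) simp
  moreover have eq: "(\<Sum>i<n. \<Sum>j<n. cnj (?v $ i) * H $$ (i,j) * ?v $ j) = ipn n v (mv H v)"
    unfolding ipn_def mv_def using H by (simp add: sum_distrib_left algebra_simps)
  ultimately show ?thesis unfolding Let_def eq by blast
qed

lemma psd_decomp:
  assumes "psd n H"
  shows "\<exists>f \<mu>. ortho n {..<n} f \<and> (\<forall>i<n. 0 \<le> \<mu> i)
     \<and> (\<forall>a<n. \<forall>b<n. H $$ (a,b) = (\<Sum>i<n. of_real (\<mu> i) * f i a * cnj (f i b)))"
proof -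
  have H: "H \<in> carrier_mat n n" "adj H = H" using assms unfolding psd_def by auto
  obtain f \<mu> where f: "ortho n {..<n} f" "\<forall>i<n. \<forall>a<n. mv H (f i) a = of_real (\<mu> i) * f i a"
     "\<forall>a<n. \<forall>b<n. H $$ (a,b) = (\<Sum>i<n. of_real (\<mu> i) * f i a * cnj (f i b))"
    using spectral[OF H] by blast
  have "0 \<le> \<mu> i" if i: "i < n" for i
  proof -
    have "ipn n (f i) (mv H (f i)) = ipn n (f i) (\<lambda>a. of_real (\<mu> i) * f i a)"
      using f(2) i by (intro ipn_cong2) auto
    also have "\<dots> = of_real (\<mu> i)" using f(1) i unfolding ortho_def by (simp add: ipn_scale2)
    finally show ?thesis using psd_qf[OF assms, of "f i"] by simp
  qed
  then show ?thesis using f by blast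
qed



lemma mult_ent:
  assumes "A \<in> carrier_mat n m" "B \<in> carrier_mat m p" "i < n" "j < p"
  shows "(A * B) $$ (i,j) = (\<Sum>k<m. A $$ (i,k) * B $$ (k,j))"
  using assms by (auto simp: scalar_prod_def atLeast0LessThan intro!: sum.cong)

lemma swap3: "(\<Sum>i\<in>A. \<Sum>j\<in>B. \<Sum>l\<in>C. G i j l) = (\<Sum>l\<in>C. \<Sum>i\<in>A. \<Sum>j\<in>B. G i j l)"
proof -
  have "(\<Sum>i\<in>A. \<Sum>j\<in>B. \<Sum>l\<in>C. G i j l) = (\<Sum>i\<in>A. \<Sum>l\<in>C. \<Sum>j\<in>B. G i j l)"
    by (intro sum.cong refl) (rule sum.swap)
  also have "\<dots> = (\<Sum>l\<in>C. \<Sum>i\<in>A. \<Sum>j\<in>B. G i j l)" by (rule sum.swap)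
  finally show ?thesis .
qed

lemma swap_in: "(\<Sum>j\<in>B. \<Sum>p\<in>C. \<Sum>q\<in>D. F j p q) = (\<Sum>p\<in>C. \<Sum>q\<in>D. \<Sum>j\<in>B. F j p q)"
proof -
  have "(\<Sum>j\<in>B. \<Sum>p\<in>C. \<Sum>q\<in>D. F j p q) = (\<Sum>p\<in>C. \<Sum>j\<in>B. \<Sum>q\<in>D. F j p q)" by (rule sum.swap)
  also have "\<dots> = (\<Sum>p\<in>C. \<Sum>q\<in>D. \<Sum>j\<in>B. F j p q)" by (intro sum.cong refl) (rule sum.swap)
  finally show ?thesis .
qed

lemma swap22: "(\<Sum>i\<in>A. \<Sum>j\<in>B. \<Sum>p\<in>C. \<Sum>q\<in>D. F i j p q) = (\<Sum>p\<in>C. \<Sum>q\<in>D. \<Sum>i\<in>A. \<Sum>j\<in>B. F i j p q)"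
proof -
  have "(\<Sum>i\<in>A. \<Sum>j\<in>B. \<Sum>p\<in>C. \<Sum>q\<in>D. F i j p q) = (\<Sum>i\<in>A. \<Sum>p\<in>C. \<Sum>q\<in>D. \<Sum>j\<in>B. F i j p q)"
    by (intro sum.cong refl) (rule swap_in)
  also have "\<dots> = (\<Sum>p\<in>C. \<Sum>q\<in>D. \<Sum>i\<in>A. \<Sum>j\<in>B. F i j p q)"
    by (rule swap_in)
  finally show ?thesis .
qed

lemma sum_kn: fixes k n :: nat shows "(\<Sum>p<k*n. F p) = (\<Sum>a<k. \<Sum>x<n. F (a*n+x))"
proof (induction k)
  case 0 then show ?case by simp
next
  case (Suc k)
  have "(\<Sum>p<Suc k*n. F p) = (\<Sum>p<k*n. F p) + (\<Sum>x<Suc k*n - k*n. F (k*n+x))"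
    by (rule sum_split_at) simp
  then show ?case using Suc by simp
qed

definition kmap :: "nat \<Rightarrow> 'i set \<Rightarrow> ('i \<Rightarrow> complex mat) \<Rightarrow> complex mat \<Rightarrow> complex mat" where
  "kmap n S K X = mat n n (\<lambda>(b,d). \<Sum>k\<in>S. \<Sum>a<n. \<Sum>c<n. K k $$ (b,a) * X $$ (a,c) * cnj (K k $$ (d,c)))"

lemma kmap_carrier[simp]: "kmap n S K X \<in> carrier_mat n n"
  unfolding kmap_def by simp

lemma kmap_dims[simp]: "dim_row (kmap n S K X) = n" "dim_col (kmap n S K X) = n"
  unfolding kmap_def by auto

lemma kmap_index: "b < n \<Longrightarrow> d < n \<Longrightarrow>
  kmap n S K X $$ (b,d) = (\<Sum>k\<in>S. \<Sum>a<n. \<Sum>c<n. K k $$ (b,a) * X $$ (a,c) * cnj (K k $$ (d,c)))"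
  unfolding kmap_def by simp

lemma psd_kmap:
  assumes M: "psd N M"
  shows "psd N (kmap N S W M)"
proof -
  have Mc: "M \<in> carrier_mat N N" and Mh: "adj M = M" using M unfolding psd_def by auto
  have hM: "cnj (M $$ (p,q)) = M $$ (q,p)" if "p < N" "q < N" for p q
    using herm_entry[OF Mc Mh that(2) that(1)] by simp
  have herm: "adj (kmap N S W M) = kmap N S W M"
  proof (rule eq_matI)
    fix i j assume i: "i < dim_row (kmap N S W M)" and j: "j < dim_col (kmap N S W M)"
    then have i: "i < N" and j: "j < N" by auto
    have "adj (kmap N S W M) $$ (i,j) = cnj (kmap N S W M $$ (j,i))" using i j by simp
    also have "\<dots> = (\<Sum>k\<in>S. \<Sum>a<N. \<Sum>c<N. cnj (W k $$ (j,a)) * M $$ (c,a) * W k $$ (i,c))"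
      using i j hM by (simp add: kmap_index cnj_sum)
    also have "\<dots> = (\<Sum>k\<in>S. \<Sum>c<N. \<Sum>a<N. W k $$ (i,c) * M $$ (c,a) * cnj (W k $$ (j,a)))"
      by (rule sum.cong[OF refl], rule trans[OF sum.swap], intro sum.cong refl, simp add: ac_simps)
    also have "\<dots> = kmap N S W M $$ (i,j)" using i j by (simp add: kmap_index)
    finally show "adj (kmap N S W M) $$ (i,j) = kmap N S W M $$ (i,j)" .
  qed auto
  have qf: "Im q = 0 \<and> 0 \<le> Re q"
    if v: "v \<in> carrier_vec N" and q: "q = (\<Sum>i<N. \<Sum>j<N. cnj (v $ i) * kmap N S W M $$ (i,j) * v $ j)" for v q
  proof -
    define u where "u k = (\<lambda>p. \<Sum>i<N. cnj (W k $$ (i,p)) * v $ i)" for k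
    have "q = (\<Sum>i<N. \<Sum>j<N. \<Sum>k\<in>S. \<Sum>p<N. \<Sum>r<N. cnj (v $ i) * W k $$ (i,p) * M $$ (p,r) * cnj (W k $$ (j,r)) * v $ j)"
      unfolding q by (intro sum.cong refl) (simp add: kmap_index sum_distrib_left sum_distrib_right ac_simps)
    also have "\<dots> = (\<Sum>k\<in>S. \<Sum>i<N. \<Sum>j<N. \<Sum>p<N. \<Sum>r<N. cnj (v $ i) * W k $$ (i,p) * M $$ (p,r) * cnj (W k $$ (j,r)) * v $ j)"
      by (rule swap3)
    also have "\<dots> = (\<Sum>k\<in>S. \<Sum>p<N. \<Sum>r<N. \<Sum>i<N. \<Sum>j<N. cnj (v $ i) * W k $$ (i,p) * M $$ (p,r) * cnj (W k $$ (j,r)) * v $ j)"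
      by (rule sum.cong[OF refl]) (rule swap22)
    also have "\<dots> = (\<Sum>k\<in>S. \<Sum>p<N. \<Sum>r<N. \<Sum>j<N. \<Sum>i<N. cnj (v $ i) * W k $$ (i,p) * M $$ (p,r) * cnj (W k $$ (j,r)) * v $ j)"
      by (rule sum.cong[OF refl], rule sum.cong[OF refl], rule sum.cong[OF refl], rule sum.swap)
    also have "\<dots> = (\<Sum>k\<in>S. ipn N (u k) (mv M (u k)))"
      unfolding ipn_def mv_def u_def using Mc
      by (intro sum.cong refl) (simp add: cnj_sum sum_distrib_left sum_distrib_right ac_simps)
    finally have qe: "q = (\<Sum>k\<in>S. ipn N (u k) (mv M (u k)))" .
    have "Im (ipn N (u k) (mv M (u k))) = 0 \<and> 0 \<le> Re (ipn N (u k) (mv M (u k)))" for k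
      using psd_qf[OF M] by simp
    then show ?thesis unfolding qe by (simp add: Im_sum Re_sum sum_nonneg)
  qed
  show ?thesis unfolding psd_def using herm qf by (auto simp: Let_def)
qed


definition kraus_tp :: "nat \<Rightarrow> 'i set \<Rightarrow> ('i \<Rightarrow> complex mat) \<Rightarrow> bool" where
  "kraus_tp n S K \<longleftrightarrow> (\<forall>a<n. \<forall>c<n. (\<Sum>k\<in>S. \<Sum>b<n. cnj (K k $$ (b,a)) * K k $$ (b,c)) = (if a = c then 1 else 0))"

lemma divmod_block: fixes n :: nat assumes "x < n" shows "(a*n+x) div n = a" "(a*n+x) mod n = x"
  using assms by auto

lemma sum_block:
  fixes n k :: nat and F G :: "nat \<Rightarrow> complex"
  assumes i: "i < k*n"
  shows "(\<Sum>p<k*n. (if p div n = i div n then F (p mod n) else 0) * G p) = (\<Sum>x<n. F x * G ((i div n)*n + x))"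
proof -
  have ik: "i div n < k" using i by (metis less_mult_imp_div_less)
  have "(\<Sum>p<k*n. (if p div n = i div n then F (p mod n) else 0) * G p)
      = (\<Sum>a<k. \<Sum>x<n. (if (a*n+x) div n = i div n then F ((a*n+x) mod n) else 0) * G (a*n+x))"
    by (rule sum_kn)
  also have "\<dots> = (\<Sum>a<k. if a = i div n then (\<Sum>x<n. F x * G (a*n+x)) else 0)"
    by (intro sum.cong refl) (auto simp: divmod_block intro!: sum.neutral)
  also have "\<dots> = (\<Sum>x<n. F x * G ((i div n)*n + x))" using ik by simp
  finally show ?thesis .
qed

lemma kmap_lin: "lin_map n (kmap n S K)"
  unfolding lin_map_def
proof (intro conjI ballI allI)
  fix A B :: "complex mat" assume A: "A \<in> carrier_mat n n" and B: "B \<in> carrier_mat n n"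
  show "kmap n S K (A + B) = kmap n S K A + kmap n S K B"
    by (rule eq_matI) (use A B in \<open>auto simp: kmap_index algebra_simps sum.distrib\<close>)
next
  fix A :: "complex mat" and c assume A: "A \<in> carrier_mat n n"
  show "kmap n S K (c \<cdot>\<^sub>m A) = c \<cdot>\<^sub>m kmap n S K A"
    by (rule eq_matI) (use A in \<open>auto simp: kmap_index algebra_simps sum_distrib_left\<close>)
qed simp

lemma kmap_tp:
  assumes tp: "kraus_tp n S K"
  shows "trace_preserving n (kmap n S K)"
  unfolding trace_preserving_def
proof
  fix X :: "complex mat" assume X: "X \<in> carrier_mat n n"
  have "mtrace (kmap n S K X) = (\<Sum>b<n. \<Sum>k\<in>S. \<Sum>a<n. \<Sum>c<n. K k $$ (b,a) * X $$ (a,c) * cnj (K k $$ (b,c)))"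
    unfolding mtrace_def by (simp add: kmap_index)
  also have "\<dots> = (\<Sum>a<n. \<Sum>c<n. \<Sum>b<n. \<Sum>k\<in>S. K k $$ (b,a) * X $$ (a,c) * cnj (K k $$ (b,c)))"
    by (rule swap22)
  also have "\<dots> = (\<Sum>a<n. \<Sum>c<n. X $$ (a,c) * (\<Sum>k\<in>S. \<Sum>b<n. cnj (K k $$ (b,c)) * K k $$ (b,a)))"
    by (intro sum.cong refl) (subst sum.swap, simp add: sum_distrib_left ac_simps)
  also have "\<dots> = (\<Sum>a<n. \<Sum>c<n. X $$ (a,c) * (if c = a then 1 else 0))"
    using tp unfolding kraus_tp_def by simp
  also have "\<dots> = mtrace X" unfolding mtrace_def using X by (simp add: if_distrib cong: if_cong)
  finally show "mtrace (kmap n S K X) = mtrace X" .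
qed

definition blockop :: "nat \<Rightarrow> nat \<Rightarrow> complex mat \<Rightarrow> complex mat" where
  "blockop k n A = mat (k*n) (k*n) (\<lambda>(i,j). if i div n = j div n then A $$ (i mod n, j mod n) else 0)"

lemma blockop_index:
  assumes "i < k*n" "p < k*n"
  shows "blockop k n A $$ (i,p) = (if p div n = i div n then A $$ (i mod n, p mod n) else 0)"
    "cnj (blockop k n A $$ (i,p)) = (if p div n = i div n then cnj (A $$ (i mod n, p mod n)) else 0)"
  using assms unfolding blockop_def by auto

lemma lift_kmap:
  "lift k n (kmap n S K) M = kmap (k*n) S (\<lambda>l. blockop k n (K l)) M"
proof (rule eq_matI)
  fix i j assume "i < dim_row (kmap (k*n) S (\<lambda>l. blockop k n (K l)) M)"
    "j < dim_col (kmap (k*n) S (\<lambda>l. blockop k n (K l)) M)"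
  then have i: "i < k*n" and j: "j < k*n" by auto
  have im: "i mod n < n" and jm: "j mod n < n" using i j
    by (metis mod_less_divisor mult_0_right neq0_conv not_less0)+
  have "kmap (k*n) S (\<lambda>l. blockop k n (K l)) M $$ (i,j)
    = (\<Sum>l\<in>S. \<Sum>p<k*n. (if p div n = i div n then K l $$ (i mod n, p mod n) else 0)
          * (\<Sum>q<k*n. (if q div n = j div n then cnj (K l $$ (j mod n, q mod n)) else 0) * M $$ (p,q)))"
    (is "_ = ?rhs")
  proof -
    have "kmap (k*n) S (\<lambda>l. blockop k n (K l)) M $$ (i,j) = (\<Sum>l\<in>S. \<Sum>p<k*n. blockop k n (K l) $$ (i,p)
          * (\<Sum>q<k*n. cnj (blockop k n (K l) $$ (j,q)) * M $$ (p,q)))"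
      using i j by (simp add: kmap_index sum_distrib_left ac_simps)
    also have "\<dots> = ?rhs"
      using i j by (intro sum.cong refl) (simp add: blockop_index if_distrib[of cnj] cong: if_cong)
    finally show ?thesis .
  qed
  also have "\<dots> = (\<Sum>l\<in>S. \<Sum>p<k*n. (if p div n = i div n then K l $$ (i mod n, p mod n) else 0)
          * (\<Sum>y<n. cnj (K l $$ (j mod n, y)) * M $$ (p, (j div n)*n + y)))"
  proof -
    have "(\<Sum>q<k*n. (if q div n = j div n then cnj (K l $$ (j mod n, q mod n)) else 0) * M $$ (p,q))
       = (\<Sum>y<n. cnj (K l $$ (j mod n, y)) * M $$ (p, (j div n)*n + y))" for l p
      using sum_block[OF j, of "\<lambda>y. cnj (K l $$ (j mod n, y))" "\<lambda>q. M $$ (p,q)"] by simp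
    then show ?thesis by simp
  qed
  also have "\<dots> = (\<Sum>l\<in>S. \<Sum>x<n. K l $$ (i mod n, x)
          * (\<Sum>y<n. cnj (K l $$ (j mod n, y)) * M $$ ((i div n)*n + x, (j div n)*n + y)))"
  proof -
    have "(\<Sum>p<k*n. (if p div n = i div n then K l $$ (i mod n, p mod n) else 0)
          * (\<Sum>y<n. cnj (K l $$ (j mod n, y)) * M $$ (p, (j div n)*n + y)))
       = (\<Sum>x<n. K l $$ (i mod n, x)
          * (\<Sum>y<n. cnj (K l $$ (j mod n, y)) * M $$ ((i div n)*n + x, (j div n)*n + y)))" for l
      using sum_block[OF i, of "\<lambda>x. K l $$ (i mod n, x)"
          "\<lambda>p. (\<Sum>y<n. cnj (K l $$ (j mod n, y)) * M $$ (p, (j div n)*n + y))"] by simp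
    then show ?thesis by simp
  qed
  also have "\<dots> = lift k n (kmap n S K) M $$ (i,j)"
    unfolding lift_def using i j im jm
    by (simp add: kmap_index sum_distrib_left ac_simps)
  finally show "lift k n (kmap n S K) M $$ (i,j) = kmap (k*n) S (\<lambda>l. blockop k n (K l)) M $$ (i,j)" ..
qed (auto simp: lift_def)

lemma kmap_cp: "completely_positive n (kmap n S K)"
  unfolding completely_positive_def lift_kmap using psd_kmap by blast

lemma kmap_channel: "kraus_tp n S K \<Longrightarrow> quantum_channel n (kmap n S K)"
  unfolding quantum_channel_def using kmap_lin kmap_tp kmap_cp by blast



definition eu :: "nat \<Rightarrow> nat \<Rightarrow> nat \<Rightarrow> complex mat" where
  "eu n a c = mat n n (\<lambda>(x,y). if x = a \<and> y = c then 1 else 0)"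

lemma eu_carrier[simp]: "eu n a c \<in> carrier_mat n n" unfolding eu_def by simp
lemma eu_dims[simp]: "dim_row (eu n a c) = n" "dim_col (eu n a c) = n" unfolding eu_def by simp_all

lemma lin_zero:
  assumes "lin_map n E"
  shows "E (0\<^sub>m n n) = 0\<^sub>m n n"
proof -
  have c: "E (0\<^sub>m n n) \<in> carrier_mat n n" using assms unfolding lin_map_def by auto
  have "E (0\<^sub>m n n) = E (0 \<cdot>\<^sub>m 0\<^sub>m n n)" by simp
  also have "\<dots> = 0 \<cdot>\<^sub>m E (0\<^sub>m n n)" using assms zero_carrier_mat[of n n] unfolding lin_map_def by blast
  also have "\<dots> = 0\<^sub>m n n" using c by (intro eq_matI) auto
  finally show ?thesis .
qed

lemma blk_lt: fixes a c n :: nat assumes "a < n" "c < n" shows "a*n + c < n*n"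
proof -
  have "a*n + c < a*n + n" using assms by simp
  also have "\<dots> = (a+1)*n" by simp
  also have "\<dots> \<le> n*n" using assms by (intro mult_right_mono) auto
  finally show ?thesis .
qed

lemma lin_expand:
  assumes E: "lin_map n E" and X: "X \<in> carrier_mat n n" and b: "b < n" and d: "d < n"
  shows "E X $$ (b,d) = (\<Sum>a<n. \<Sum>c<n. X $$ (a,c) * E (eu n a c) $$ (b,d))"
proof -
  define Xt where "Xt t = mat n n (\<lambda>(a,c). if a*n + c < t then X $$ (a,c) else 0)" for t
  have Ec: "E A \<in> carrier_mat n n" if "A \<in> carrier_mat n n" for A
    using E that unfolding lin_map_def by auto
  have main: "t \<le> n*n \<Longrightarrow> E (Xt t) $$ (b,d) = (\<Sum>s<t. X $$ (s div n, s mod n) * E (eu n (s div n) (s mod n)) $$ (b,d))" for t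
  proof (induction t)
    case 0
    have "Xt 0 = 0\<^sub>m n n" unfolding Xt_def by (intro eq_matI) auto
    then show ?case using lin_zero[OF E] b d by simp
  next
    case (Suc t)
    then have tn: "t < n*n" by simp
    then have np: "n > 0" by (cases n) auto
    define a where "a = t div n"
    define c where "c = t mod n"
    have a: "a < n" unfolding a_def using tn by (metis less_mult_imp_div_less)
    have c: "c < n" unfolding c_def using np by simp
    have t: "t = a*n + c" unfolding a_def c_def by simp
    have "Xt (Suc t) = Xt t + X $$ (a,c) \<cdot>\<^sub>m eu n a c"
    proof (rule eq_matI)
      fix x y assume "x < dim_row (Xt t + X $$ (a,c) \<cdot>\<^sub>m eu n a c)" "y < dim_col (Xt t + X $$ (a,c) \<cdot>\<^sub>m eu n a c)"
      then have x: "x < n" and y: "y < n" unfolding Xt_def by auto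
      have "x*n + y = a*n + c \<longleftrightarrow> x = a \<and> y = c"
      proof
        assume h: "x*n + y = a*n + c"
        have "x = (x*n+y) div n" using y by simp
        also have "\<dots> = a" using h c by simp
        finally have "x = a" .
        then show "x = a \<and> y = c" using h by simp
      qed auto
      then show "Xt (Suc t) $$ (x,y) = (Xt t + X $$ (a,c) \<cdot>\<^sub>m eu n a c) $$ (x,y)"
        unfolding Xt_def eu_def using x y t by auto
    qed (auto simp: Xt_def)
    then have "E (Xt (Suc t)) = E (Xt t) + X $$ (a,c) \<cdot>\<^sub>m E (eu n a c)"
      using E unfolding lin_map_def by (auto simp: Xt_def)
    then have "E (Xt (Suc t)) $$ (b,d) = E (Xt t) $$ (b,d) + X $$ (a,c) * E (eu n a c) $$ (b,d)"
      using Ec[of "Xt t"] Ec[of "eu n a c"] b d by (simp add: Xt_def)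
    then show ?case using Suc tn by (simp add: a_def c_def)
  qed
  have "Xt (n*n) = X" unfolding Xt_def using X blk_lt by (intro eq_matI) auto
  then have "E X $$ (b,d) = (\<Sum>s<n*n. X $$ (s div n, s mod n) * E (eu n (s div n) (s mod n)) $$ (b,d))"
    using main[of "n*n"] by simp
  also have "\<dots> = (\<Sum>a<n. \<Sum>c<n. X $$ (a,c) * E (eu n a c) $$ (b,d))"
    by (subst sum_kn) (auto simp: divmod_block intro!: sum.cong)
  finally show ?thesis .
qed


definition omega :: "nat \<Rightarrow> complex mat" where
  "omega n = mat (n*n) (n*n) (\<lambda>(i,j). if i div n = i mod n \<and> j div n = j mod n then 1 else 0)"

lemma omega_psd: "psd (n*n) (omega n)"
proof -
  have c: "omega n \<in> carrier_mat (n*n) (n*n)" unfolding omega_def by simp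
  have h: "adj (omega n) = omega n"
    by (rule eq_matI) (auto simp: omega_def)
  have q: "Im q = 0 \<and> 0 \<le> Re q" if q: "q = (\<Sum>i<n*n. \<Sum>j<n*n. cnj (v $ i) * omega n $$ (i,j) * v $ j)" for v :: "complex vec" and q
  proof -
    define P where "P i = (i div n = i mod n)" for i
    define s where "s = (\<Sum>j<n*n. if P j then v $ j else 0)"
    have "q = (\<Sum>i<n*n. \<Sum>j<n*n. (if P i then cnj (v $ i) else 0) * (if P j then v $ j else 0))"
      unfolding q omega_def P_def by (intro sum.cong refl) auto
    also have "\<dots> = cnj s * s" unfolding s_def by (simp add: sum_product cnj_sum if_distrib[of cnj] cong: if_cong)
    finally have "q = cnj s * s" .
    then have "q = of_real ((cmod s)^2)" using complex_norm_square[of s] by (simp add: mult.commute del: of_real_power)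
    then show ?thesis by simp
  qed
  show ?thesis unfolding psd_def using c h q by (auto simp: Let_def)
qed

lemma channel_kraus:
  assumes Q: "quantum_channel n E"
  shows "\<exists>K. (\<forall>k. K k \<in> carrier_mat n n) \<and> (\<forall>X\<in>carrier_mat n n. E X = kmap n {..<n*n} K X) \<and> kraus_tp n {..<n*n} K"
proof -
  have L: "lin_map n E" and CP: "completely_positive n E" and TP: "trace_preserving n E"
    using Q unfolding quantum_channel_def by auto
  have Ec: "E A \<in> carrier_mat n n" if "A \<in> carrier_mat n n" for A
    using L that unfolding lin_map_def by auto
  define J where "J = lift n n E (omega n)"
  have J: "psd (n*n) J" unfolding J_def using CP omega_psd unfolding completely_positive_def by blast
  have Jent: "J $$ (a*n+b, c*n+d) = E (eu n a c) $$ (b,d)" if "a < n" "b < n" "c < n" "d < n" for a b c d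
  proof -
    have "mat n n (\<lambda>(x,y). omega n $$ (((a*n+b) div n)*n + x, ((c*n+d) div n)*n + y)) = eu n a c"
      using that by (intro eq_matI) (auto simp: omega_def eu_def blk_lt divmod_block)
    then show ?thesis unfolding J_def lift_def using that blk_lt by (simp add: divmod_block)
  qed
  obtain f \<mu> where f: "ortho (n*n) {..<n*n} f" "\<forall>i<n*n. 0 \<le> \<mu> i"
     "\<forall>p<n*n. \<forall>q<n*n. J $$ (p,q) = (\<Sum>i<n*n. of_real (\<mu> i) * f i p * cnj (f i q))"
    using psd_decomp[OF J] by blast
  define K where "K i = mat n n (\<lambda>(b,a). of_real (sqrt (\<mu> i)) * f i (a*n+b))" for i
  have Eeu: "E (eu n a c) $$ (b,d) = (\<Sum>i<n*n. K i $$ (b,a) * cnj (K i $$ (d,c)))"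
    if abcd: "a < n" "b < n" "c < n" "d < n" for a b c d
  proof -
    have "E (eu n a c) $$ (b,d) = (\<Sum>i<n*n. of_real (\<mu> i) * f i (a*n+b) * cnj (f i (c*n+d)))"
      using Jent[OF abcd] f(3) blk_lt abcd by simp
    also have "\<dots> = (\<Sum>i<n*n. K i $$ (b,a) * cnj (K i $$ (d,c)))"
    proof (intro sum.cong refl)
      fix i assume i: "i \<in> {..<n*n}"
      have "of_real (\<mu> i) = (of_real (sqrt (\<mu> i)) * of_real (sqrt (\<mu> i)) :: complex)"
        using f(2) i by (simp flip: of_real_mult)
      then show "of_real (\<mu> i) * f i (a*n+b) * cnj (f i (c*n+d)) = K i $$ (b,a) * cnj (K i $$ (d,c))"
        unfolding K_def using abcd by (simp add: ac_simps)
    qed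
    finally show ?thesis .
  qed
  have rep: "E X = kmap n {..<n*n} K X" if X: "X \<in> carrier_mat n n" for X
  proof (rule eq_matI)
    fix b d assume "b < dim_row (kmap n {..<n*n} K X)" "d < dim_col (kmap n {..<n*n} K X)"
    then have b: "b < n" and d: "d < n" by auto
    have "E X $$ (b,d) = (\<Sum>a<n. \<Sum>c<n. X $$ (a,c) * E (eu n a c) $$ (b,d))"
      by (rule lin_expand[OF L X b d])
    also have "\<dots> = (\<Sum>a<n. \<Sum>c<n. \<Sum>i<n*n. K i $$ (b,a) * X $$ (a,c) * cnj (K i $$ (d,c)))"
      using Eeu b d by (simp add: sum_distrib_left ac_simps)
    also have "\<dots> = kmap n {..<n*n} K X $$ (b,d)"
      unfolding kmap_index[OF b d] by (rule swap3)
    finally show "E X $$ (b,d) = kmap n {..<n*n} K X $$ (b,d)" .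
  qed (use Ec X in auto)
  have "kraus_tp n {..<n*n} K"
    unfolding kraus_tp_def
  proof (intro allI impI)
    fix a c assume a: "a < n" and c: "c < n"
    have "mtrace (E (eu n c a)) = mtrace (eu n c a)" using TP unfolding trace_preserving_def by simp
    moreover have "mtrace (eu n c a) = (if a = c then 1 else 0)"
      unfolding mtrace_def eu_def using a c by (auto simp: if_distrib cong: if_cong)
    moreover have "mtrace (E (eu n c a)) = (\<Sum>b<n. \<Sum>i<n*n. K i $$ (b,c) * cnj (K i $$ (b,a)))"
      unfolding mtrace_def using Ec[of "eu n c a"] Eeu a c by simp
    moreover have "(\<Sum>b<n. \<Sum>i<n*n. K i $$ (b,c) * cnj (K i $$ (b,a)))
       = (\<Sum>i<n*n. \<Sum>b<n. cnj (K i $$ (b,a)) * K i $$ (b,c))"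
      by (subst sum.swap) (simp add: ac_simps)
    ultimately show "(\<Sum>i<n*n. \<Sum>b<n. cnj (K i $$ (b,a)) * K i $$ (b,c)) = (if a = c then 1 else 0)"
      by simp
  qed
  moreover have "\<forall>k. K k \<in> carrier_mat n n" unfolding K_def by simp
  ultimately show ?thesis using rep by blast
qed



lemma sum_sq_zero:
  assumes fin: "finite J" and s: "(\<Sum>j\<in>J. x j * cnj (x j)) = 0" and j: "j \<in> J"
  shows "x j = 0"
proof -
  have "(\<Sum>j\<in>J. (cmod (x j))^2) = 0"
  proof -
    have "of_real (\<Sum>j\<in>J. (cmod (x j))^2) = (\<Sum>j\<in>J. x j * cnj (x j))"
      unfolding of_real_sum by (intro sum.cong refl) (simp add: complex_norm_square del: of_real_power)
    then show ?thesis using s by (simp only: of_real_eq_0_iff)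
  qed
  then have "(cmod (x j))^2 = 0" using sum_nonneg_eq_0_iff[OF fin, of "\<lambda>j. (cmod (x j))^2"] j by auto
  then show ?thesis by simp
qed

lemma KL:
  fixes B :: "'j \<Rightarrow> complex mat"
  assumes fin: "finite J"
    and Ph: "\<And>a b. a < n \<Longrightarrow> b < n \<Longrightarrow> cnj (P $$ (a,b)) = P $$ (b,a)"
    and st: "\<And>x y a c. x < n \<Longrightarrow> y < n \<Longrightarrow> a < n \<Longrightarrow> c < n \<Longrightarrow>
        (\<Sum>j\<in>J. B j $$ (x,a) * cnj (B j $$ (y,c))) = P $$ (x,a) * P $$ (c,y)"
  shows "\<exists>cc. \<forall>j\<in>J. \<forall>x<n. \<forall>a<n. B j $$ (x,a) = cc j * P $$ (x,a)"
proof (cases "\<exists>s<n. \<exists>t<n. P $$ (s,t) \<noteq> 0")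
  case False
  have "B j $$ (x,a) = 0 * P $$ (x,a)" if j: "j \<in> J" and x: "x < n" and a: "a < n" for j x a
  proof -
    have "(\<Sum>j\<in>J. B j $$ (x,a) * cnj (B j $$ (x,a))) = 0"
      using st[OF x x a a] False x a by auto
    then show ?thesis using sum_sq_zero[OF fin _ j] by simp
  qed
  then show ?thesis by (intro exI[of _ "\<lambda>j. 0"]) auto
next
  case True
  then obtain s t where s: "s < n" and t: "t < n" and nz: "P $$ (s,t) \<noteq> 0" by auto
  define cc where "cc j = B j $$ (s,t) / P $$ (s,t)" for j
  have Pts: "P $$ (t,s) = cnj (P $$ (s,t))" using Ph[OF s t] by simp
  have c1: "(\<Sum>j\<in>J. B j $$ (x,a) * cnj (cc j)) = P $$ (x,a)" if x: "x < n" and a: "a < n" for x a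
  proof -
    have "(\<Sum>j\<in>J. B j $$ (x,a) * cnj (cc j)) = (\<Sum>j\<in>J. B j $$ (x,a) * cnj (B j $$ (s,t))) / cnj (P $$ (s,t))"
      unfolding cc_def by (simp add: sum_divide_distrib)
    also have "\<dots> = P $$ (x,a)" using st[OF x s a t] Pts nz by simp
    finally show ?thesis .
  qed
  have c2: "(\<Sum>j\<in>J. cc j * cnj (cc j)) = 1"
  proof -
    have "(\<Sum>j\<in>J. cc j * cnj (cc j)) = (\<Sum>j\<in>J. B j $$ (s,t) * cnj (cc j)) / P $$ (s,t)"
      unfolding cc_def by (simp add: sum_divide_distrib mult.commute)
    also have "\<dots> = 1" using c1[OF s t] nz by simp
    finally show ?thesis .
  qed
  have "B j $$ (x,a) = cc j * P $$ (x,a)" if j: "j \<in> J" and x: "x < n" and a: "a < n" for j x a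
  proof -
    define p where "p = P $$ (x,a)"
    have pp: "P $$ (a,x) = cnj p" unfolding p_def using Ph[OF x a] by simp
    have c3: "(\<Sum>j\<in>J. cc j * cnj (B j $$ (x,a))) = cnj p"
      using arg_cong[OF c1[OF x a], of cnj] unfolding p_def by (simp add: cnj_sum mult.commute)
    have "(\<Sum>j\<in>J. (B j $$ (x,a) - cc j * p) * cnj (B j $$ (x,a) - cc j * p))
      = (\<Sum>j\<in>J. B j $$ (x,a) * cnj (B j $$ (x,a))) - cnj p * (\<Sum>j\<in>J. B j $$ (x,a) * cnj (cc j))
        - p * (\<Sum>j\<in>J. cc j * cnj (B j $$ (x,a))) + p * cnj p * (\<Sum>j\<in>J. cc j * cnj (cc j))"
      by (simp add: algebra_simps sum_subtractf sum.distrib sum_distrib_left)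
    also have "\<dots> = 0" using st[OF x x a a] c1[OF x a] c2 c3 pp unfolding p_def by simp
    finally have "B j $$ (x,a) - cc j * p = 0" using sum_sq_zero[OF fin _ j, of "\<lambda>j. B j $$ (x,a) - cc j * p"] by simp
    then show ?thesis unfolding p_def by simp
  qed
  then show ?thesis by (intro exI[of _ cc]) auto
qed



lemma adj_adj: "adj (adj A) = A"
  by (rule eq_matI) (auto simp: adj_def)

lemma mv_mult:
  assumes A: "A \<in> carrier_mat n m" and B: "B \<in> carrier_mat m p" and a: "a < n"
  shows "mv (A * B) v a = mv A (mv B v) a"
proof -
  have "mv (A * B) v a = (\<Sum>b<p. \<Sum>k<m. A $$ (a,k) * B $$ (k,b) * v b)"
    unfolding mv_def using A B a mult_ent[OF A B a] index_mult_mat(3)[of A B] by (auto simp: sum_distrib_right simp del: index_mult_mat intro!: sum.cong)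
  also have "\<dots> = (\<Sum>k<m. \<Sum>b<p. A $$ (a,k) * B $$ (k,b) * v b)" by (rule sum.swap)
  also have "\<dots> = mv A (mv B v) a"
    unfolding mv_def using A B by (simp add: sum_distrib_left ac_simps)
  finally show ?thesis .
qed

lemma ipn_adj:
  assumes A: "A \<in> carrier_mat n n"
  shows "ipn n u (mv A v) = ipn n (mv (adj A) u) v"
proof -
  have "ipn n u (mv A v) = (\<Sum>a<n. \<Sum>b<n. cnj (u a) * A $$ (a,b) * v b)"
    unfolding ipn_def mv_def using A by (simp add: sum_distrib_left ac_simps)
  also have "\<dots> = (\<Sum>b<n. \<Sum>a<n. cnj (u a) * A $$ (a,b) * v b)" by (rule sum.swap)
  also have "\<dots> = ipn n (mv (adj A) u) v"
    unfolding ipn_def mv_def using A by (simp add: sum_distrib_right sum_distrib_left cnj_sum ac_simps)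
  finally show ?thesis .
qed

lemma mv_cong: "(\<And>b. b < dim_col A \<Longrightarrow> v b = w b) \<Longrightarrow> mv A v a = mv A w a"
  unfolding mv_def by simp

lemma unitary_ext:
  assumes P: "orth_proj n P" and V: "V \<in> carrier_mat n n" and VV: "adj V * V = P" and VP: "V * P = V"
  shows "\<exists>U. unitary_mat n U \<and> U * P = V"
proof -
  have Pc: "P \<in> carrier_mat n n" and PP: "P * P = P" and Ph: "adj P = P"
    using P unfolding orth_proj_def by auto
  obtain f \<mu> where f: "ortho n {..<n} f" "\<forall>i<n. \<forall>a<n. mv P (f i) a = of_real (\<mu> i) * f i a"
    using spectral[OF Pc Ph] by blast
  have ff: "ipn n (f i) (f j) = (if i = j then 1 else 0)" if "i < n" "j < n" for i j
    using f(1) that unfolding ortho_def by auto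
  have mu01: "\<mu> i = 0 \<or> \<mu> i = 1" if i: "i < n" for i
  proof -
    have e1: "ipn n (f i) (mv P (f i)) = of_real (\<mu> i)"
      using f(2) i ff[OF i i] by (subst ipn_cong2[of n _ "\<lambda>a. of_real (\<mu> i) * f i a"]) (auto simp: ipn_scale2)
    have "ipn n (mv P (f i)) (mv P (f i)) = ipn n (f i) (mv (adj P) (mv P (f i)))"
      using ipn_adj[of "adj P" n "f i" "mv P (f i)"] Pc by (simp add: adj_adj)
    also have "\<dots> = ipn n (f i) (mv (adj P * P) (f i))"
      using Pc by (intro ipn_cong2) (simp add: mv_mult[of _ n n _ n])
    also have "\<dots> = of_real (\<mu> i)" using e1 Ph PP by simp
    finally have "ipn n (mv P (f i)) (mv P (f i)) = of_real (\<mu> i)" .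
    moreover have "ipn n (mv P (f i)) (mv P (f i)) = of_real (\<mu> i) * of_real (\<mu> i)"
      using f(2) i ff[OF i i] by (subst ipn_cong1[of n _ "\<lambda>a. of_real (\<mu> i) * f i a"], simp)
        (subst ipn_cong2[of n _ "\<lambda>a. of_real (\<mu> i) * f i a"], auto simp: ipn_scale1 ipn_scale2)
    ultimately have "\<mu> i * \<mu> i = \<mu> i" by (metis of_real_eq_iff of_real_mult)
    then show ?thesis by (metis mult_cancel_right2 mult_eq_0_iff)
  qed
  define I1 where "I1 = {i. i < n \<and> \<mu> i = 1}"
  define h where "h i = mv V (f i)" for i
  have VVf: "mv (adj V) (mv V (f j)) a = of_real (\<mu> j) * f j a" if "j < n" "a < n" for j a
    using mv_mult[of "adj V" n n V n a "f j"] V VV f(2) that by simp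
  have oh: "ortho n I1 h"
    unfolding ortho_def
  proof (intro ballI)
    fix i j assume i: "i \<in> I1" and j: "j \<in> I1"
    have "ipn n (h i) (h j) = ipn n (f i) (mv (adj V) (mv V (f j)))"
      unfolding h_def using ipn_adj[of "adj V" n "f i" "mv V (f j)"] V by (simp add: adj_adj)
    also have "\<dots> = ipn n (f i) (f j)"
      using VVf j unfolding I1_def by (intro ipn_cong2) auto
    finally show "ipn n (h i) (h j) = (if i = j then 1 else 0)" using ff i j unfolding I1_def by auto
  qed
  obtain g where g: "ortho n {..<n} g" "\<forall>i\<in>I1. g i = h i"
    using ortho_extend[OF oh, of "{..<n}"] unfolding I1_def by auto
  have gg: "ipn n (g i) (g j) = (if i = j then 1 else 0)" if "i < n" "j < n" for i j
    using g(1) that unfolding ortho_def by auto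
  define U where "U = mat n n (\<lambda>(a,b). \<Sum>i<n. g i a * cnj (f i b))"
  have Uc: "U \<in> carrier_mat n n" unfolding U_def by simp
  have uni: "adj U * U = 1\<^sub>m n"
  proof (rule eq_matI)
    fix b b' assume "b < dim_row (1\<^sub>m n :: complex mat)" "b' < dim_col (1\<^sub>m n :: complex mat)"
    then have b: "b < n" and b': "b' < n" by auto
    have "(adj U * U) $$ (b,b') = (\<Sum>a<n. cnj (U $$ (a,b)) * U $$ (a,b'))"
      using mult_ent[of "adj U" n n U n b b'] Uc b b' by simp
    also have "\<dots> = (\<Sum>a<n. \<Sum>i<n. \<Sum>i'<n. f i b * cnj (f i' b') * (cnj (g i a) * g i' a))"
      unfolding U_def using b b'
      by (simp add: cnj_sum sum_product ac_simps)
    also have "\<dots> = (\<Sum>i<n. \<Sum>i'<n. \<Sum>a<n. f i b * cnj (f i' b') * (cnj (g i a) * g i' a))"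
      by (rule swap_in)
    also have "\<dots> = (\<Sum>i<n. \<Sum>i'<n. f i b * cnj (f i' b') * ipn n (g i) (g i'))"
      unfolding ipn_def by (simp add: sum_distrib_left)
    also have "\<dots> = (\<Sum>i<n. f i b * cnj (f i b'))"
    proof (intro sum.cong refl)
      fix i assume i: "i \<in> {..<n}"
      have "(\<Sum>i'<n. f i b * cnj (f i' b') * ipn n (g i) (g i'))
          = (\<Sum>i'<n. if i' = i then f i b * cnj (f i' b') else 0)"
        using gg i by (intro sum.cong refl) auto
      then show "(\<Sum>i'<n. f i b * cnj (f i' b') * ipn n (g i) (g i')) = f i b * cnj (f i b')"
        using i by simp
    qed
    also have "\<dots> = (if b = b' then 1 else 0)" using ortho_complete[OF f(1) _ _ b b'] by simp
    finally show "(adj U * U) $$ (b,b') = 1\<^sub>m n $$ (b,b')" using b b' by simp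
  qed (use Uc in auto)
  have Vf0: "mv V (f i) a = 0" if i: "i < n" and mi: "\<mu> i = 0" and a: "a < n" for i a
  proof -
    have "mv V (f i) a = mv (V * P) (f i) a" using VP by simp
    also have "\<dots> = mv V (mv P (f i)) a" using mv_mult[OF V Pc a] .
    also have "\<dots> = mv V (\<lambda>_. 0) a" using f(2) i mi V by (intro mv_cong) auto
    also have "\<dots> = 0" unfolding mv_def by simp
    finally show ?thesis .
  qed
  have UP: "U * P = V"
  proof (rule eq_matI)
    fix a b assume "a < dim_row V" "b < dim_col V"
    then have a: "a < n" and b: "b < n" using V by auto
    have Pcol: "(\<Sum>c<n. cnj (f i c) * P $$ (c,b)) = of_real (\<mu> i) * cnj (f i b)" if i: "i < n" for i
    proof -
      have "(\<Sum>c<n. cnj (f i c) * P $$ (c,b)) = cnj (mv P (f i) b)"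
        unfolding mv_def using Pc herm_entry[OF Pc Ph b] by (simp add: cnj_sum mult.commute)
      then show ?thesis using f(2) i b by simp
    qed
    have "(U * P) $$ (a,b) = (\<Sum>c<n. (\<Sum>i<n. g i a * cnj (f i c)) * P $$ (c,b))"
      using mult_ent[OF Uc Pc a b] a unfolding U_def by simp
    also have "\<dots> = (\<Sum>i<n. g i a * (\<Sum>c<n. cnj (f i c) * P $$ (c,b)))"
      by (simp add: sum_distrib_left sum_distrib_right ac_simps) (rule sum.swap)
    also have "\<dots> = (\<Sum>i<n. mv V (f i) a * cnj (f i b))"
    proof (intro sum.cong refl)
      fix i assume i: "i \<in> {..<n}"
      show "g i a * (\<Sum>c<n. cnj (f i c) * P $$ (c,b)) = mv V (f i) a * cnj (f i b)"
        using mu01[of i] i Pcol[of i] Vf0[of i a] a g(2) unfolding I1_def h_def by auto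
    qed
    also have "\<dots> = (\<Sum>c<n. V $$ (a,c) * (\<Sum>i<n. f i c * cnj (f i b)))"
      unfolding mv_def using V by (simp add: sum_distrib_left sum_distrib_right ac_simps) (rule sum.swap)
    also have "\<dots> = (\<Sum>c<n. if c = b then V $$ (a,c) else 0)"
      using ortho_complete[OF f(1)] b by (intro sum.cong refl) auto
    also have "\<dots> = V $$ (a,b)" using b by simp
    finally show "(U * P) $$ (a,b) = V $$ (a,b)" .
  qed (use V Uc Pc in auto)
  show ?thesis using uni Uc UP unfolding unitary_mat_def by blast
qed



definition choi :: "'i set \<Rightarrow> ('i \<Rightarrow> complex mat) \<Rightarrow> nat \<Rightarrow> nat \<Rightarrow> nat \<Rightarrow> nat \<Rightarrow> complex" where
  "choi S K b a d c = (\<Sum>k\<in>S. K k $$ (b,a) * cnj (K k $$ (d,c)))"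

lemma kmap_alt:
  assumes "b < n" "d < n"
  shows "kmap n S K X $$ (b,d) = (\<Sum>a<n. \<Sum>c<n. X $$ (a,c) * choi S K b a d c)"
proof -
  have "kmap n S K X $$ (b,d) = (\<Sum>k\<in>S. \<Sum>a<n. \<Sum>c<n. K k $$ (b,a) * X $$ (a,c) * cnj (K k $$ (d,c)))"
    using kmap_index[OF assms] .
  also have "\<dots> = (\<Sum>a<n. \<Sum>c<n. \<Sum>k\<in>S. K k $$ (b,a) * X $$ (a,c) * cnj (K k $$ (d,c)))"
    by (rule swap3[symmetric])
  also have "\<dots> = (\<Sum>a<n. \<Sum>c<n. X $$ (a,c) * choi S K b a d c)"
    unfolding choi_def by (simp add: sum_distrib_left ac_simps)
  finally show ?thesis .
qed

lemma kmap_choi_eq: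
  assumes "\<And>b a d c. b < n \<Longrightarrow> a < n \<Longrightarrow> d < n \<Longrightarrow> c < n \<Longrightarrow> choi S K b a d c = choi T K' b a d c"
  shows "kmap n S K X = kmap n T K' X"
  by (rule eq_matI) (auto simp: kmap_alt assms)

lemma choi_comp:
  assumes L: "\<And>l. l \<in> S \<Longrightarrow> L l \<in> carrier_mat n n" and K: "\<And>k. k \<in> T \<Longrightarrow> K k \<in> carrier_mat n n"
    and fS: "finite S" and fT: "finite T"
    and b: "b < n" and a: "a < n" and d: "d < n" and c: "c < n"
  shows "choi (S \<times> T) (\<lambda>(l,k). L l * K k) b a d c
     = (\<Sum>l\<in>S. \<Sum>x<n. \<Sum>y<n. L l $$ (b,x) * choi T K x a y c * cnj (L l $$ (d,y)))"
proof -
  have "choi (S \<times> T) (\<lambda>(l,k). L l * K k) b a d c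
      = (\<Sum>l\<in>S. \<Sum>k\<in>T. (L l * K k) $$ (b,a) * cnj ((L l * K k) $$ (d,c)))"
    unfolding choi_def sum.cartesian_product by (intro sum.cong refl) (auto split: prod.splits)
  also have "\<dots> = (\<Sum>l\<in>S. \<Sum>k\<in>T. \<Sum>x<n. \<Sum>y<n. L l $$ (b,x) * K k $$ (x,a) * cnj (K k $$ (y,c)) * cnj (L l $$ (d,y)))"
  proof (intro sum.cong refl)
    fix l k assume l: "l \<in> S" and k: "k \<in> T"
    show "(L l * K k) $$ (b,a) * cnj ((L l * K k) $$ (d,c))
        = (\<Sum>x<n. \<Sum>y<n. L l $$ (b,x) * K k $$ (x,a) * cnj (K k $$ (y,c)) * cnj (L l $$ (d,y)))"
      using mult_ent[OF L[OF l] K[OF k] b a] mult_ent[OF L[OF l] K[OF k] d c]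
      by (simp add: sum_product cnj_sum ac_simps)
  qed
  also have "\<dots> = (\<Sum>l\<in>S. \<Sum>x<n. \<Sum>y<n. \<Sum>k\<in>T. L l $$ (b,x) * K k $$ (x,a) * cnj (K k $$ (y,c)) * cnj (L l $$ (d,y)))"
    by (rule sum.cong[OF refl], rule swap_in)
  also have "\<dots> = (\<Sum>l\<in>S. \<Sum>x<n. \<Sum>y<n. L l $$ (b,x) * choi T K x a y c * cnj (L l $$ (d,y)))"
    unfolding choi_def by (simp add: sum_distrib_left sum_distrib_right ac_simps)
  finally show ?thesis .
qed

lemma kmap_comp:
  assumes L: "\<And>l. l \<in> S \<Longrightarrow> L l \<in> carrier_mat n n" and K: "\<And>k. k \<in> T \<Longrightarrow> K k \<in> carrier_mat n n"
    and fS: "finite S" and fT: "finite T"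
  shows "kmap n S L (kmap n T K Y) = kmap n (S \<times> T) (\<lambda>(l,k). L l * K k) Y"
proof (rule eq_matI)
  fix b d assume "b < dim_row (kmap n (S \<times> T) (\<lambda>(l,k). L l * K k) Y)" "d < dim_col (kmap n (S \<times> T) (\<lambda>(l,k). L l * K k) Y)"
  then have b: "b < n" and d: "d < n" by auto
  have "kmap n S L (kmap n T K Y) $$ (b,d)
     = (\<Sum>l\<in>S. \<Sum>x<n. \<Sum>y<n. L l $$ (b,x) * (\<Sum>a<n. \<Sum>c<n. Y $$ (a,c) * choi T K x a y c) * cnj (L l $$ (d,y)))"
    unfolding kmap_index[OF b d] by (intro sum.cong refl) (simp add: kmap_alt)
  also have "\<dots> = (\<Sum>l\<in>S. \<Sum>x<n. \<Sum>y<n. \<Sum>a<n. \<Sum>c<n. Y $$ (a,c) * (L l $$ (b,x) * choi T K x a y c * cnj (L l $$ (d,y))))"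
    by (simp add: sum_distrib_left sum_distrib_right ac_simps)
  also have "\<dots> = (\<Sum>l\<in>S. \<Sum>a<n. \<Sum>c<n. \<Sum>x<n. \<Sum>y<n. Y $$ (a,c) * (L l $$ (b,x) * choi T K x a y c * cnj (L l $$ (d,y))))"
    by (rule sum.cong[OF refl], rule swap22)
  also have "\<dots> = (\<Sum>a<n. \<Sum>c<n. \<Sum>l\<in>S. \<Sum>x<n. \<Sum>y<n. Y $$ (a,c) * (L l $$ (b,x) * choi T K x a y c * cnj (L l $$ (d,y))))"
    by (rule swap3[symmetric])
  also have "\<dots> = (\<Sum>a<n. \<Sum>c<n. Y $$ (a,c) * choi (S \<times> T) (\<lambda>(l,k). L l * K k) b a d c)"
    by (intro sum.cong refl) (simp add: choi_comp[OF L K fS fT b _ d] sum_distrib_left)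
  also have "\<dots> = kmap n (S \<times> T) (\<lambda>(l,k). L l * K k) Y $$ (b,d)"
    by (rule kmap_alt[OF b d, symmetric])
  finally show "kmap n S L (kmap n T K Y) $$ (b,d) = kmap n (S \<times> T) (\<lambda>(l,k). L l * K k) Y $$ (b,d)" .
qed auto

lemma kmap_single:
  assumes W: "W \<in> carrier_mat n n" and X: "X \<in> carrier_mat n n"
  shows "kmap n {u} (\<lambda>_. W) X = W * X * adj W"
proof (rule eq_matI)
  fix b d assume "b < dim_row (W * X * adj W)" "d < dim_col (W * X * adj W)"
  then have b: "b < n" and d: "d < n" using W by auto
  have WX: "W * X \<in> carrier_mat n n" using W X by simp
  have "(W * X * adj W) $$ (b,d) = (\<Sum>c<n. (\<Sum>a<n. W $$ (b,a) * X $$ (a,c)) * cnj (W $$ (d,c)))"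
    using mult_ent[OF WX adj_carrier[OF W] b d] mult_ent[OF W X b] W d by simp
  also have "\<dots> = (\<Sum>a<n. \<Sum>c<n. W $$ (b,a) * X $$ (a,c) * cnj (W $$ (d,c)))"
    by (simp add: sum_distrib_right) (rule sum.swap)
  finally show "kmap n {u} (\<lambda>_. W) X $$ (b,d) = (W * X * adj W) $$ (b,d)"
    using b d by (simp add: kmap_index)
qed (use W in auto)

lemma kmap_reindex:
  assumes "bij_betw h A B"
  shows "kmap n B K X = kmap n A (\<lambda>i. K (h i)) X"
  by (rule kmap_choi_eq) (simp add: choi_def sum.reindex_bij_betw[OF assms, symmetric])

lemma kmap_sandwich:
  assumes K: "\<And>k. k \<in> T \<Longrightarrow> K k \<in> carrier_mat n n" and fT: "finite T"
    and W: "W \<in> carrier_mat n n" and X: "X \<in> carrier_mat n n"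
  shows "kmap n T K (W * X * adj W) = kmap n T (\<lambda>k. K k * W) X"
proof -
  have "kmap n T K (W * X * adj W) = kmap n T K (kmap n {()} (\<lambda>_. W) X)"
    using kmap_single[OF W X, where u="()"] by simp
  also have "\<dots> = kmap n (T \<times> {()}) (\<lambda>(l,k). K l * W) X"
    by (rule kmap_comp) (use K fT W in auto)
  also have "\<dots> = kmap n T (\<lambda>k. K k * W) X"
    by (subst kmap_reindex[of "\<lambda>k. (k,())" T]) (auto simp: bij_betw_def inj_on_def)
  finally show ?thesis .
qed

lemma choi_mix:
  assumes f: "ortho N {..<N} f" and b: "b < n" and a: "a < n" and d: "d < n" and c: "c < n"
  shows "choi {..<N} (\<lambda>r. mat n n (\<lambda>(x,y). \<Sum>k<N. f r k * F k $$ (x,y))) b a d c = choi {..<N} F b a d c"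
proof -
  have "choi {..<N} (\<lambda>r. mat n n (\<lambda>(x,y). \<Sum>k<N. f r k * F k $$ (x,y))) b a d c
     = (\<Sum>r<N. \<Sum>k<N. \<Sum>j<N. f r k * cnj (f r j) * (F k $$ (b,a) * cnj (F j $$ (d,c))))"
    unfolding choi_def using b a d c by (simp add: sum_product cnj_sum ac_simps)
  also have "\<dots> = (\<Sum>k<N. \<Sum>j<N. (\<Sum>r<N. f r k * cnj (f r j)) * (F k $$ (b,a) * cnj (F j $$ (d,c))))"
    by (subst swap3[symmetric]) (simp add: sum_distrib_right)
  also have "\<dots> = (\<Sum>k<N. \<Sum>j<N. if j = k then F k $$ (b,a) * cnj (F j $$ (d,c)) else 0)"
    using ortho_complete[OF f] by (intro sum.cong refl) auto
  also have "\<dots> = choi {..<N} F b a d c" unfolding choi_def by simp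
  finally show ?thesis .
qed



lemma adj_mult:
  assumes "A \<in> carrier_mat n m" "B \<in> carrier_mat m p"
  shows "adj (A * B) = adj B * adj A"
proof (rule eq_matI)
  fix i j assume "i < dim_row (adj B * adj A)" "j < dim_col (adj B * adj A)"
  then have i: "i < p" and j: "j < n" using assms by auto
  show "adj (A * B) $$ (i,j) = (adj B * adj A) $$ (i,j)"
    using assms i j mult_ent[OF assms j i] mult_ent[OF adj_carrier[OF assms(2)] adj_carrier[OF assms(1)] i j]
    by (simp add: cnj_sum mult.commute)
qed (use assms in auto)

lemma adj_smult: "adj (c \<cdot>\<^sub>m A) = cnj c \<cdot>\<^sub>m adj A"
  by (rule eq_matI) (auto simp: adj_def)

lemma adj_one: "adj (1\<^sub>m n) = (1\<^sub>m n :: complex mat)"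
  by (rule eq_matI) (auto simp: adj_def)

lemma kmap_as_sum:
  assumes K: "\<And>k. k \<in> S \<Longrightarrow> K k \<in> carrier_mat n n" and X: "X \<in> carrier_mat n n"
    and b: "b < n" and d: "d < n"
  shows "kmap n S K X $$ (b,d) = (\<Sum>k\<in>S. (K k * X * adj (K k)) $$ (b,d))"
proof -
  have "(K k * X * adj (K k)) $$ (b,d) = (\<Sum>a<n. \<Sum>c<n. K k $$ (b,a) * X $$ (a,c) * cnj (K k $$ (d,c)))"
    if k: "k \<in> S" for k
  proof -
    have "(K k * X * adj (K k)) $$ (b,d) = kmap n {k} (\<lambda>_. K k) X $$ (b,d)"
      using kmap_single[OF K[OF k] X, where u=k] by simp
    also have "\<dots> = (\<Sum>a<n. \<Sum>c<n. K k $$ (b,a) * X $$ (a,c) * cnj (K k $$ (d,c)))"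
      using b d by (simp add: kmap_index)
    finally show ?thesis .
  qed
  then show ?thesis using b d by (simp add: kmap_index)
qed

lemma kmap_trace:
  assumes K: "\<And>k. k \<in> S \<Longrightarrow> K k \<in> carrier_mat n n"
  shows "mtrace (kmap n S K X) = (\<Sum>a<n. \<Sum>c<n. X $$ (a,c) * (\<Sum>k\<in>S. (adj (K k) * K k) $$ (c,a)))"
proof -
  have "mtrace (kmap n S K X) = (\<Sum>b<n. \<Sum>k\<in>S. \<Sum>a<n. \<Sum>c<n. K k $$ (b,a) * X $$ (a,c) * cnj (K k $$ (b,c)))"
    unfolding mtrace_def by (simp add: kmap_index)
  also have "\<dots> = (\<Sum>a<n. \<Sum>c<n. \<Sum>b<n. \<Sum>k\<in>S. K k $$ (b,a) * X $$ (a,c) * cnj (K k $$ (b,c)))"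
    by (rule swap22)
  also have "\<dots> = (\<Sum>a<n. \<Sum>c<n. X $$ (a,c) * (\<Sum>k\<in>S. (adj (K k) * K k) $$ (c,a)))"
  proof (intro sum.cong refl)
    fix a c assume a: "a \<in> {..<n}" and c: "c \<in> {..<n}"
    have "(\<Sum>k\<in>S. (adj (K k) * K k) $$ (c,a)) = (\<Sum>k\<in>S. \<Sum>b<n. cnj (K k $$ (b,c)) * K k $$ (b,a))"
    proof (intro sum.cong refl)
      fix k assume k: "k \<in> S"
      show "(adj (K k) * K k) $$ (c,a) = (\<Sum>b<n. cnj (K k $$ (b,c)) * K k $$ (b,a))"
        using mult_ent[OF adj_carrier[OF K[OF k]] K[OF k]] a c K[OF k] by simp
    qed
    then show "(\<Sum>b<n. \<Sum>k\<in>S. K k $$ (b,a) * X $$ (a,c) * cnj (K k $$ (b,c)))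
       = X $$ (a,c) * (\<Sum>k\<in>S. (adj (K k) * K k) $$ (c,a))"
      by (subst sum.swap) (simp add: sum_distrib_left ac_simps)
  qed
  finally show ?thesis .
qed

lemma eu00_psd: assumes "N > 0" shows "psd N (eu N 0 0)"
proof -
  have h: "adj (eu N 0 0) = eu N 0 0" by (rule eq_matI) (auto simp: eu_def)
  have "Im q = 0 \<and> 0 \<le> Re q" if q: "q = (\<Sum>i<N. \<Sum>j<N. cnj (v $ i) * eu N 0 0 $$ (i,j) * v $ j)" for v :: "complex vec" and q
  proof -
    have "q = (\<Sum>i<N. \<Sum>j<N. if i = 0 \<and> j = 0 then cnj (v $ 0) * v $ 0 else 0)"
      unfolding q eu_def by (intro sum.cong refl) auto
    also have "\<dots> = (\<Sum>i<N. if i = 0 then cnj (v $ 0) * v $ 0 else 0)"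
      using assms by (intro sum.cong refl) auto
    also have "\<dots> = cnj (v $ 0) * v $ 0" using assms by simp
    finally have "q = cnj (v $ 0) * v $ 0" .
    then have "q = of_real ((cmod (v $ 0))^2)" using complex_norm_square[of "v $ 0"]
      by (simp add: mult.commute del: of_real_power)
    then show ?thesis by simp
  qed
  then show ?thesis unfolding psd_def using h by (auto simp: Let_def)
qed



lemma assoc5:
  assumes "A \<in> carrier_mat n n" "B \<in> carrier_mat n n" "C \<in> carrier_mat n n" "D \<in> carrier_mat n n" "F \<in> carrier_mat n n"
  shows "A * (B * C * D) * F = (A * B) * C * (D * F)"
  using assms by (simp add: assoc_mult_mat[of _ n n _ n _ n])

lemma assoc4:
  assumes "A \<in> carrier_mat n n" "B \<in> carrier_mat n n" "C \<in> carrier_mat n n" "D \<in> carrier_mat n n"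
  shows "A * B * C * D = (A * B) * (C * D)"
  using assms by (simp add: assoc_mult_mat[of _ n n _ n _ n])

lemma smult_one_mat: "(1::complex) \<cdot>\<^sub>m A = A"
  by (rule eq_matI) auto

lemma eu_sandwich:
  assumes A: "A \<in> carrier_mat n n" and C: "C \<in> carrier_mat n n" and a: "a < n" and c: "c < n"
    and x: "x < n" and y: "y < n"
  shows "(A * eu n a c * C) $$ (x,y) = A $$ (x,a) * C $$ (c,y)"
proof -
  have Ae: "A * eu n a c \<in> carrier_mat n n" using A by simp
  have e1: "(A * eu n a c) $$ (x,z) = (if z = c then A $$ (x,a) else 0)" if z: "z < n" for z
  proof -
    have "(A * eu n a c) $$ (x,z) = (\<Sum>k<n. A $$ (x,k) * eu n a c $$ (k,z))"
      using mult_ent[OF A eu_carrier x z] .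
    also have "\<dots> = (\<Sum>k<n. if k = a then (if z = c then A $$ (x,a) else 0) else 0)"
      using z by (intro sum.cong refl) (auto simp: eu_def)
    finally show ?thesis using a by simp
  qed
  have "(A * eu n a c * C) $$ (x,y) = (\<Sum>z<n. (A * eu n a c) $$ (x,z) * C $$ (z,y))"
    using mult_ent[OF Ae C x y] .
  also have "\<dots> = (\<Sum>z<n. if z = c then A $$ (x,a) * C $$ (z,y) else 0)"
    using e1 by (intro sum.cong refl) auto
  finally show ?thesis using c by simp
qed

lemma kmap_eu:
  assumes "x < n" "y < n" "a < n" "c < n"
  shows "kmap n S K (eu n a c) $$ (x,y) = choi S K x a y c"
proof -
  have "kmap n S K (eu n a c) $$ (x,y) = (\<Sum>a'<n. \<Sum>c'<n. eu n a c $$ (a',c') * choi S K x a' y c')"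
    using kmap_alt[OF assms(1,2)] .
  also have "\<dots> = (\<Sum>a'<n. \<Sum>c'<n. if a' = a \<and> c' = c then choi S K x a' y c' else 0)"
    by (intro sum.cong refl) (auto simp: eu_def)
  also have "\<dots> = (\<Sum>a'<n. if a' = a then choi S K x a' y c else 0)"
    using assms by (intro sum.cong refl) auto
  also have "\<dots> = choi S K x a y c" using assms by simp
  finally show ?thesis .
qed

lemma forward_main:
  assumes Q: "quantum_channel n E" and P: "orth_proj n P" and corr: "correctable n E P"
    and Pnz: "P \<noteq> 0\<^sub>m n n"
  shows "\<exists>(m::nat) (p::nat \<Rightarrow> real) (U::nat \<Rightarrow> complex mat).
       (\<forall>i<m. 0 \<le> p i) \<and> (\<Sum>i<m. p i) = 1 \<and> (\<forall>i<m. unitary_mat n (U i)) \<and>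
       (\<forall>\<rho> \<in> carrier_mat n n. \<rho> = P * \<rho> * P \<longrightarrow> E \<rho> = mixed_unitary n m p U \<rho>) \<and>
       (\<forall>i<m. \<forall>j<m. i \<noteq> j \<longrightarrow> P * adj (U i) * U j * P = 0\<^sub>m n n)"
proof -
  have Pc: "P \<in> carrier_mat n n" and PP: "P * P = P" and Ph: "adj P = P"
    using P unfolding orth_proj_def by auto
  have Phe: "cnj (P $$ (a,b)) = P $$ (b,a)" if "a < n" "b < n" for a b
    using herm_entry[OF Pc Ph that(2) that(1)] by simp
  have PPe: "(\<Sum>z<n. P $$ (a,z) * P $$ (z,b)) = P $$ (a,b)" if "a < n" "b < n" for a b
    using mult_ent[OF Pc Pc that] PP by simp
  obtain R where R: "quantum_channel n R" and RE: "\<forall>\<rho>\<in>carrier_mat n n. R (E (P * \<rho> * P)) = P * \<rho> * P"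
    using corr unfolding correctable_def by blast
  define N where "N = n * n"
  obtain K where Kc: "\<forall>k. K k \<in> carrier_mat n n" and EK: "\<forall>X\<in>carrier_mat n n. E X = kmap n {..<N} K X"
    and Ktp: "kraus_tp n {..<N} K"
    using channel_kraus[OF Q] unfolding N_def by blast
  obtain L where Lc: "\<forall>k. L k \<in> carrier_mat n n" and RL: "\<forall>X\<in>carrier_mat n n. R X = kmap n {..<N} L X"
    and Ltp: "kraus_tp n {..<N} L"
    using channel_kraus[OF R] unfolding N_def by blast
  define B where "B = (\<lambda>(l,k). L l * (K k * P))"
  have Bc: "B j \<in> carrier_mat n n" for j using Kc Lc Pc unfolding B_def by (auto split: prod.splits intro!: mult_carrier_mat)
  have KPc: "K k * P \<in> carrier_mat n n" for k using Kc Pc by (auto intro!: mult_carrier_mat)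
  have star: "kmap n ({..<N} \<times> {..<N}) B X = P * X * P" if X: "X \<in> carrier_mat n n" for X
  proof -
    have PXP: "P * X * P \<in> carrier_mat n n" using Pc X by auto
    have "P * X * P = R (E (P * X * P))" using RE X by simp
    also have "\<dots> = kmap n {..<N} L (kmap n {..<N} K (P * X * adj P))"
      using EK RL PXP Ph by simp
    also have "\<dots> = kmap n {..<N} L (kmap n {..<N} (\<lambda>k. K k * P) X)"
      using kmap_sandwich[OF _ _ Pc X, of "{..<N}" K] Kc by simp
    also have "\<dots> = kmap n ({..<N} \<times> {..<N}) B X"
      unfolding B_def by (rule kmap_comp) (use Kc Lc Pc KPc in auto)
    finally show ?thesis by simp
  qed
  have star2: "(\<Sum>j\<in>{..<N} \<times> {..<N}. B j $$ (x,a) * cnj (B j $$ (y,c))) = P $$ (x,a) * P $$ (c,y)"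
    if xyac: "x < n" "y < n" "a < n" "c < n" for x y a c
  proof -
    have "kmap n ({..<N} \<times> {..<N}) B (eu n a c) $$ (x,y) = (P * eu n a c * P) $$ (x,y)"
      using star[of "eu n a c"] by simp
    then show ?thesis using kmap_eu[OF xyac, of "{..<N} \<times> {..<N}" B] eu_sandwich[OF Pc Pc xyac(3,4,1,2)]
      unfolding choi_def by simp
  qed
  obtain cc where cc: "\<forall>j\<in>{..<N} \<times> {..<N}. \<forall>x<n. \<forall>a<n. B j $$ (x,a) = cc j * P $$ (x,a)"
    using KL[of "{..<N} \<times> {..<N}" n P B] Phe star2 by blast
  have n0: "n > 0"
  proof (rule ccontr)
    assume "\<not> n > 0"
    then have "n = 0" by simp
    then have "P = 0\<^sub>m n n" using Pc by (intro eq_matI) auto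
    then show False using Pnz by simp
  qed
  have N0: "N > 0" unfolding N_def using n0 by simp
  define W where "W l = mat N N (\<lambda>(k,z). cnj (cc (l,k)))" for l
  define Lam where "Lam = mat N N (\<lambda>(k,j). \<Sum>l<N. cnj (cc (l,k)) * cc (l,j))"
  have "Lam = kmap N {..<N} W (eu N 0 0)"
  proof (rule eq_matI)
    fix k j assume "k < dim_row (kmap N {..<N} W (eu N 0 0))" "j < dim_col (kmap N {..<N} W (eu N 0 0))"
    then have k: "k < N" and j: "j < N" by auto
    show "Lam $$ (k,j) = kmap N {..<N} W (eu N 0 0) $$ (k,j)"
      using kmap_eu[OF k j N0 N0, of "{..<N}" W] k j N0 unfolding Lam_def choi_def by (simp add: W_def)
  qed (auto simp: Lam_def)
  then have Lpsd: "psd N Lam" using psd_kmap[OF eu00_psd[OF N0]] by simp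
  obtain f \<mu> where f: "ortho N {..<N} f" "\<forall>i<N. 0 \<le> \<mu> i"
     "\<forall>a<N. \<forall>b<N. Lam $$ (a,b) = (\<Sum>i<N. of_real (\<mu> i) * f i a * cnj (f i b))"
    using psd_decomp[OF Lpsd] by blast
  have ff: "ipn N (f i) (f j) = (if i = j then 1 else 0)" if "i < N" "j < N" for i j
    using f(1) that unfolding ortho_def by auto
  define G where "G r = mat n n (\<lambda>(x,y). \<Sum>k<N. f r k * (K k * P) $$ (x,y))" for r
  have Gc: "G r \<in> carrier_mat n n" for r unfolding G_def by simp
  have Gd[simp]: "dim_row (G r) = n" "dim_col (G r) = n" for r unfolding G_def by simp_all
  have EG: "E \<rho> = kmap n {..<N} G \<rho>" if r: "\<rho> \<in> carrier_mat n n" "\<rho> = P * \<rho> * P" for \<rho>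
  proof -
    have "E \<rho> = kmap n {..<N} K (P * \<rho> * adj P)" using EK r Ph by metis
    also have "\<dots> = kmap n {..<N} (\<lambda>k. K k * P) \<rho>"
      using kmap_sandwich[OF _ _ Pc r(1), of "{..<N}" K] Kc by simp
    also have "\<dots> = kmap n {..<N} G \<rho>"
      unfolding G_def by (rule kmap_choi_eq) (rule choi_mix[OF f(1), symmetric])
    finally show ?thesis .
  qed
  define \<gamma> where "\<gamma> l r = (\<Sum>k<N. f r k * cc (l,k))" for l r
  have LG: "(L l * G r) $$ (z,a) = \<gamma> l r * P $$ (z,a)" if l: "l < N" and z: "z < n" and a: "a < n" for l r z a
  proof -
    have "(L l * G r) $$ (z,a) = (\<Sum>x<n. L l $$ (z,x) * (\<Sum>k<N. f r k * (K k * P) $$ (x,a)))"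
      using mult_ent[OF _ Gc z a] Lc a unfolding G_def by simp
    also have "\<dots> = (\<Sum>k<N. f r k * (\<Sum>x<n. L l $$ (z,x) * (K k * P) $$ (x,a)))"
      by (simp add: sum_distrib_left ac_simps) (rule sum.swap)
    also have "\<dots> = (\<Sum>k<N. f r k * B (l,k) $$ (z,a))"
      unfolding B_def using mult_ent[OF _ KPc z a] Lc by simp
    also have "\<dots> = \<gamma> l r * P $$ (z,a)"
      unfolding \<gamma>_def using cc l z a by (simp add: sum_distrib_left sum_distrib_right ac_simps)
    finally show ?thesis .
  qed
  have Gram: "(\<Sum>l<N. cnj (\<gamma> l r) * \<gamma> l s) = (if r = s then of_real (\<mu> r) else 0)"
    if r: "r < N" and s: "s < N" for r s
  proof -
    have "(\<Sum>l<N. cnj (\<gamma> l r) * \<gamma> l s) = (\<Sum>l<N. \<Sum>k<N. \<Sum>j<N. cnj (f r k) * f s j * (cnj (cc (l,k)) * cc (l,j)))"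
      unfolding \<gamma>_def cnj_sum sum_product by (intro sum.cong refl) (simp add: ac_simps)
    also have "\<dots> = (\<Sum>k<N. \<Sum>j<N. \<Sum>l<N. cnj (f r k) * f s j * (cnj (cc (l,k)) * cc (l,j)))"
      by (rule swap3[symmetric])
    also have "\<dots> = (\<Sum>k<N. \<Sum>j<N. cnj (f r k) * f s j * Lam $$ (k,j))"
      unfolding Lam_def by (simp add: sum_distrib_left)
    also have "\<dots> = (\<Sum>k<N. \<Sum>j<N. \<Sum>t<N. of_real (\<mu> t) * ((cnj (f r k) * f t k) * (cnj (f t j) * f s j)))"
      using f(3) by (simp add: sum_distrib_left ac_simps)
    also have "\<dots> = (\<Sum>t<N. \<Sum>k<N. \<Sum>j<N. of_real (\<mu> t) * ((cnj (f r k) * f t k) * (cnj (f t j) * f s j)))"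
      by (rule swap3)
    also have "\<dots> = (\<Sum>t<N. of_real (\<mu> t) * (ipn N (f r) (f t) * ipn N (f t) (f s)))"
      unfolding ipn_def sum_product by (simp add: sum_distrib_left)
    also have "\<dots> = (\<Sum>t<N. if t = r then (if r = s then of_real (\<mu> r) else 0) else 0)"
      using ff r s by (intro sum.cong refl) auto
    also have "\<dots> = (if r = s then of_real (\<mu> r) else 0)" using r by simp
    finally show ?thesis .
  qed
  have Lid: "(\<Sum>l<N. \<Sum>z<n. cnj (L l $$ (z,x)) * L l $$ (z,y)) = (if x = y then 1 else 0)"
    if "x < n" "y < n" for x y
    using Ltp that unfolding kraus_tp_def by simp
  have GG: "adj (G r) * G s = (\<Sum>l<N. cnj (\<gamma> l r) * \<gamma> l s) \<cdot>\<^sub>m P" for r s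
  proof (rule eq_matI)
    fix a b assume "a < dim_row ((\<Sum>l<N. cnj (\<gamma> l r) * \<gamma> l s) \<cdot>\<^sub>m P)"
      "b < dim_col ((\<Sum>l<N. cnj (\<gamma> l r) * \<gamma> l s) \<cdot>\<^sub>m P)"
    then have a: "a < n" and b: "b < n" using Pc by auto
    have "(adj (G r) * G s) $$ (a,b) = (\<Sum>x<n. cnj (G r $$ (x,a)) * G s $$ (x,b))"
      using mult_ent[OF adj_carrier[OF Gc] Gc a b] Gc a by simp
    also have "\<dots> = (\<Sum>x<n. \<Sum>y<n. if y = x then cnj (G r $$ (x,a)) * G s $$ (y,b) else 0)"
      by simp
    also have "\<dots> = (\<Sum>x<n. \<Sum>y<n. \<Sum>l<N. \<Sum>z<n. cnj (L l $$ (z,x)) * L l $$ (z,y) * (cnj (G r $$ (x,a)) * G s $$ (y,b)))"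
    proof (intro sum.cong refl)
      fix x y assume x: "x \<in> {..<n}" and y: "y \<in> {..<n}"
      have "(\<Sum>l<N. \<Sum>z<n. cnj (L l $$ (z,x)) * L l $$ (z,y) * (cnj (G r $$ (x,a)) * G s $$ (y,b)))
          = (\<Sum>l<N. \<Sum>z<n. cnj (L l $$ (z,x)) * L l $$ (z,y)) * (cnj (G r $$ (x,a)) * G s $$ (y,b))"
        by (simp add: sum_distrib_right)
      then show "(if y = x then cnj (G r $$ (x,a)) * G s $$ (y,b) else 0)
          = (\<Sum>l<N. \<Sum>z<n. cnj (L l $$ (z,x)) * L l $$ (z,y) * (cnj (G r $$ (x,a)) * G s $$ (y,b)))"
        using Lid[of x y] x y by auto
    qed
    also have "\<dots> = (\<Sum>l<N. \<Sum>z<n. \<Sum>x<n. \<Sum>y<n. cnj (L l $$ (z,x)) * L l $$ (z,y) * (cnj (G r $$ (x,a)) * G s $$ (y,b)))"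
      by (rule swap22)
    also have "\<dots> = (\<Sum>l<N. \<Sum>z<n. cnj ((L l * G r) $$ (z,a)) * (L l * G s) $$ (z,b))"
    proof (intro sum.cong refl)
      fix l z assume l: "l \<in> {..<N}" and z: "z \<in> {..<n}"
      show "(\<Sum>x<n. \<Sum>y<n. cnj (L l $$ (z,x)) * L l $$ (z,y) * (cnj (G r $$ (x,a)) * G s $$ (y,b)))
          = cnj ((L l * G r) $$ (z,a)) * (L l * G s) $$ (z,b)"
        using mult_ent[OF _ Gc _ a, of "L l" n z r] mult_ent[OF _ Gc _ b, of "L l" n z s] Lc z
        by (simp add: cnj_sum sum_product ac_simps) (rule sum.swap)
    qed
    also have "\<dots> = (\<Sum>l<N. \<Sum>z<n. cnj (\<gamma> l r) * \<gamma> l s * (P $$ (a,z) * P $$ (z,b)))"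
      using LG a b Phe by (intro sum.cong refl) (simp add: ac_simps)
    also have "\<dots> = (\<Sum>l<N. cnj (\<gamma> l r) * \<gamma> l s * (\<Sum>z<n. P $$ (a,z) * P $$ (z,b)))"
      by (simp add: sum_distrib_left)
    also have "\<dots> = (\<Sum>l<N. cnj (\<gamma> l r) * \<gamma> l s) * P $$ (a,b)"
      using PPe[OF a b] by (simp add: sum_distrib_right)
    finally show "(adj (G r) * G s) $$ (a,b) = ((\<Sum>l<N. cnj (\<gamma> l r) * \<gamma> l s) \<cdot>\<^sub>m P) $$ (a,b)"
      using a b Pc by simp
  qed (use Gc Pc in auto)
  have GG': "adj (G r) * G s = (if r = s then of_real (\<mu> r) else 0) \<cdot>\<^sub>m P" if "r < N" "s < N" for r s
    using GG[of r s] Gram[OF that] by simp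
  have trP: "mtrace P \<noteq> 0"
  proof
    assume t0: "mtrace P = 0"
    have "mtrace P = (\<Sum>a<n. \<Sum>c<n. P $$ (a,c) * cnj (P $$ (a,c)))"
      unfolding mtrace_def using Pc PPe Phe by simp
    also have "\<dots> = (\<Sum>(a,c)\<in>{..<n} \<times> {..<n}. P $$ (a,c) * cnj (P $$ (a,c)))"
      by (simp add: sum.cartesian_product)
    finally have "(\<Sum>j\<in>{..<n} \<times> {..<n}. (\<lambda>(a,c). P $$ (a,c)) j * cnj ((\<lambda>(a,c). P $$ (a,c)) j)) = 0"
      using t0 by (simp add: case_prod_beta)
    then have "P $$ (a,c) = 0" if "a < n" "c < n" for a c
      using sum_sq_zero[of "{..<n} \<times> {..<n}" "\<lambda>(a,c). P $$ (a,c)" "(a,c)"] that by simp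
    then have "P = 0\<^sub>m n n" using Pc by (intro eq_matI) auto
    then show False using Pnz by simp
  qed
  have sum_mu: "(\<Sum>r<N. \<mu> r) = 1"
  proof -
    have PPP: "P = P * P * P" using PP by simp
    have "mtrace P = mtrace (E P)" using Q Pc unfolding quantum_channel_def trace_preserving_def by simp
    also have "\<dots> = mtrace (kmap n {..<N} G P)" using EG[OF Pc PPP] by simp
    also have "\<dots> = (\<Sum>a<n. \<Sum>c<n. P $$ (a,c) * (\<Sum>r<N. (adj (G r) * G r) $$ (c,a)))"
      using kmap_trace[of "{..<N}" G n P] Gc by simp
    also have "\<dots> = (\<Sum>a<n. \<Sum>c<n. P $$ (a,c) * (\<Sum>r<N. of_real (\<mu> r) * P $$ (c,a)))"
      using GG' Pc by (intro sum.cong refl) simp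
    also have "\<dots> = of_real (\<Sum>r<N. \<mu> r) * (\<Sum>a<n. \<Sum>c<n. P $$ (a,c) * P $$ (c,a))"
      by (simp add: sum_distrib_left sum_distrib_right ac_simps)
    also have "\<dots> = of_real (\<Sum>r<N. \<mu> r) * mtrace P"
      unfolding mtrace_def using Pc PPe by simp
    finally have "mtrace P = of_real (\<Sum>r<N. \<mu> r) * mtrace P" .
    then have "of_real (\<Sum>r<N. \<mu> r) = (1::complex)" using trP by simp
    then show ?thesis by (simp only: of_real_eq_1_iff)
  qed
  have G0: "G r = 0\<^sub>m n n" if r: "r < N" and m0: "\<mu> r = 0" for r
  proof (rule eq_matI)
    fix x a assume "x < dim_row (0\<^sub>m n n :: complex mat)" "a < dim_col (0\<^sub>m n n :: complex mat)"
    then have x: "x < n" and a: "a < n" by auto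
    have "(adj (G r) * G r) $$ (a,a) = 0" using GG'[OF r r] m0 a Pc by simp
    moreover have "(adj (G r) * G r) $$ (a,a) = (\<Sum>y<n. G r $$ (y,a) * cnj (G r $$ (y,a)))"
      using mult_ent[OF adj_carrier[OF Gc] Gc a a] a by (simp add: mult.commute)
    ultimately have "(\<Sum>y\<in>{..<n}. G r $$ (y,a) * cnj (G r $$ (y,a))) = 0" by simp
    then show "G r $$ (x,a) = 0\<^sub>m n n $$ (x,a)"
      using sum_sq_zero[of "{..<n}" "\<lambda>y. G r $$ (y,a)" x] x a by simp
  qed auto
  have GP: "G r * P = G r" for r
  proof (rule eq_matI)
    fix x y assume "x < dim_row (G r)" "y < dim_col (G r)"
    then have x: "x < n" and y: "y < n" by auto
    have "(G r * P) $$ (x,y) = (\<Sum>z<n. (\<Sum>k<N. f r k * (K k * P) $$ (x,z)) * P $$ (z,y))"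
      using mult_ent[OF Gc Pc x y] x unfolding G_def by simp
    also have "\<dots> = (\<Sum>k<N. f r k * (\<Sum>z<n. (K k * P) $$ (x,z) * P $$ (z,y)))"
      by (simp add: sum_distrib_left sum_distrib_right ac_simps) (rule sum.swap)
    also have "\<dots> = (\<Sum>k<N. f r k * ((K k * P) * P) $$ (x,y))"
      using mult_ent[OF KPc Pc x y] by simp
    also have "\<dots> = G r $$ (x,y)"
    proof -
      have "(K k * P) * P = K k * P" for k using Kc Pc PP by (simp add: assoc_mult_mat[of _ n n _ n _ n])
      then show ?thesis unfolding G_def using x y by simp
    qed
    finally show "(G r * P) $$ (x,y) = G r $$ (x,y)" .
  qed (use Gc Pc in auto)
  define Sp where "Sp = {r \<in> {..<N}. \<mu> r > 0}"
  define cf where "cf r = (1 / sqrt (\<mu> r))" for r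
  define V where "V r = of_real (cf r) \<cdot>\<^sub>m G r" for r
  have Vc: "V r \<in> carrier_mat n n" for r unfolding V_def using Gc by simp
  have adjVV: "adj (V r) * V s = (of_real (cf r * cf s) * (if r = s then of_real (\<mu> r) else 0)) \<cdot>\<^sub>m P"
    if "r < N" "s < N" for r s
  proof -
    have "adj (V r) * V s = of_real (cf r) \<cdot>\<^sub>m adj (G r) * (of_real (cf s) \<cdot>\<^sub>m G s)"
      unfolding V_def adj_smult by simp
    also have "\<dots> = of_real (cf r) \<cdot>\<^sub>m (adj (G r) * (of_real (cf s) \<cdot>\<^sub>m G s))"
      by (rule mult_smult_assoc_mat[OF adj_carrier[OF Gc[of r]] smult_carrier_mat[OF Gc[of s]]])
    also have "\<dots> = of_real (cf r) \<cdot>\<^sub>m (of_real (cf s) \<cdot>\<^sub>m (adj (G r) * G s))"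
      using mult_smult_distrib[OF adj_carrier[OF Gc[of r]] Gc[of s]] by simp
    also have "\<dots> = (of_real (cf r * cf s) * (if r = s then of_real (\<mu> r) else 0)) \<cdot>\<^sub>m P"
      unfolding GG'[OF that] by (rule eq_matI) auto
    finally show ?thesis .
  qed
  have VU: "\<exists>U. unitary_mat n U \<and> U * P = V r" if r: "r \<in> Sp" for r
  proof (rule unitary_ext[OF P Vc])
    have rN: "r < N" and mp: "\<mu> r > 0" using r unfolding Sp_def by auto
    have "of_real (cf r * cf r) * of_real (\<mu> r) = (1::complex)"
      unfolding cf_def using mp by (simp flip: of_real_mult)
    then show "adj (V r) * V r = P" using adjVV[OF rN rN] Pc by (simp add: smult_one_mat)
    show "V r * P = V r" unfolding V_def using mult_smult_assoc_mat[OF Gc[of r] Pc] GP by simp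
  qed
  define Uf where "Uf r = (SOME U. unitary_mat n U \<and> U * P = V r)" for r
  have Uf: "\<forall>r\<in>Sp. unitary_mat n (Uf r) \<and> Uf r * P = V r"
  proof
    fix r assume "r \<in> Sp"
    from VU[OF this] show "unitary_mat n (Uf r) \<and> Uf r * P = V r"
      unfolding Uf_def by (rule someI_ex)
  qed
  have finSp: "finite Sp" unfolding Sp_def by simp
  obtain h where h: "bij_betw h {..<card Sp} Sp"
    using ex_bij_betw_nat_finite[OF finSp] by (auto simp: atLeast0LessThan)
  define m where "m = card Sp"
  define p where "p i = \<mu> (h i)" for i
  define U where "U i = Uf (h i)" for i
  have hS: "h i \<in> Sp" if "i < m" for i using h that unfolding m_def bij_betw_def by auto
  have hinj: "h i \<noteq> h j" if "i < m" "j < m" "i \<noteq> j" for i j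
    using h that unfolding m_def bij_betw_def inj_on_def by auto
  have Uu: "unitary_mat n (U i)" and UP: "U i * P = V (h i)" if "i < m" for i
    using Uf hS[OF that] unfolding U_def by auto
  have Uc: "U i \<in> carrier_mat n n" if "i < m" for i using Uu[OF that] unfolding unitary_mat_def by simp
  have c1: "\<forall>i<m. 0 \<le> p i"
  proof (intro allI impI)
    fix i assume "i < m"
    then have "h i \<in> Sp" by (rule hS)
    then show "0 \<le> p i" unfolding p_def Sp_def by simp
  qed
  have c2: "(\<Sum>i<m. p i) = 1"
  proof -
    have "(\<Sum>i<m. p i) = (\<Sum>r\<in>Sp. \<mu> r)"
      unfolding p_def m_def using sum.reindex_bij_betw[OF h, of \<mu>] by simp
    also have "\<dots> = (\<Sum>r<N. \<mu> r)"
      using f(2) by (intro sum.mono_neutral_left) (auto simp: Sp_def)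
    finally show ?thesis using sum_mu by simp
  qed
  have c3: "\<forall>\<rho> \<in> carrier_mat n n. \<rho> = P * \<rho> * P \<longrightarrow> E \<rho> = mixed_unitary n m p U \<rho>"
  proof (intro ballI impI)
    fix \<rho> assume rc: "\<rho> \<in> carrier_mat n n" and rP: "\<rho> = P * \<rho> * P"
    have "E \<rho> = kmap n {..<N} G \<rho>" using EG[OF rc rP] .
    also have "\<dots> = kmap n Sp G \<rho>"
    proof (rule kmap_choi_eq)
      fix b a d c assume badc: "b < n" "a < n" "d < n" "c < n"
      show "choi {..<N} G b a d c = choi Sp G b a d c"
        unfolding choi_def
      proof (rule sum.mono_neutral_right)
        show "Sp \<subseteq> {..<N}" unfolding Sp_def by auto
        show "\<forall>i\<in>{..<N} - Sp. G i $$ (b,a) * cnj (G i $$ (d,c)) = 0"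
        proof
          fix i assume i: "i \<in> {..<N} - Sp"
          then have "\<mu> i = 0" using f(2) unfolding Sp_def by force
          then have "G i = 0\<^sub>m n n" using G0 i by simp
          then show "G i $$ (b,a) * cnj (G i $$ (d,c)) = 0" using badc by simp
        qed
      qed simp
    qed
    also have "\<dots> = kmap n {..<m} (\<lambda>i. G (h i)) \<rho>"
      using kmap_reindex[OF h] unfolding m_def by simp
    also have "\<dots> = mixed_unitary n m p U \<rho>"
    proof (rule eq_matI)
      fix b d assume "b < dim_row (mixed_unitary n m p U \<rho>)" "d < dim_col (mixed_unitary n m p U \<rho>)"
      then have b: "b < n" and d: "d < n" unfolding mixed_unitary_def by auto
      have "kmap n {..<m} (\<lambda>i. G (h i)) \<rho> $$ (b,d) = (\<Sum>i<m. (G (h i) * \<rho> * adj (G (h i))) $$ (b,d))"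
        using kmap_as_sum[OF _ rc b d, of "{..<m}" "\<lambda>i. G (h i)"] Gc by simp
      also have "\<dots> = (\<Sum>i<m. of_real (p i) * (U i * \<rho> * adj (U i)) $$ (b,d))"
      proof (intro sum.cong refl)
        fix i assume i: "i \<in> {..<m}"
        then have i: "i < m" by simp
        have mp: "\<mu> (h i) > 0" using hS[OF i] unfolding Sp_def by auto
        have aU: "adj (U i) \<in> carrier_mat n n" using Uc[OF i] by simp
        have "U i * \<rho> * adj (U i) = U i * (P * \<rho> * P) * adj (U i)"
          using arg_cong[OF rP, of "\<lambda>X. U i * X * adj (U i)"] .
        also have "\<dots> = (U i * P) * \<rho> * (adj P * adj (U i))"
          using assoc5[OF Uc[OF i] Pc rc Pc aU] Ph by simp
        also have "\<dots> = V (h i) * \<rho> * adj (V (h i))"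
          using UP[OF i] adj_mult[OF Uc[OF i] Pc] by simp
        finally have e: "U i * \<rho> * adj (U i) = V (h i) * \<rho> * adj (V (h i))" .
        have "(V (h i) * \<rho> * adj (V (h i))) $$ (b,d) = kmap n {()} (\<lambda>_. V (h i)) \<rho> $$ (b,d)"
          using kmap_single[OF Vc rc, where u="()"] by simp
        also have "\<dots> = of_real (cf (h i) * cf (h i)) * kmap n {()} (\<lambda>_. G (h i)) \<rho> $$ (b,d)"
          using b d Gc unfolding V_def by (simp add: kmap_index sum_distrib_left ac_simps)
        also have "\<dots> = of_real (cf (h i) * cf (h i)) * (G (h i) * \<rho> * adj (G (h i))) $$ (b,d)"
          using kmap_single[OF Gc rc, where u="()"] by simp
        finally have "of_real (p i) * (U i * \<rho> * adj (U i)) $$ (b,d)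
            = of_real (p i * (cf (h i) * cf (h i))) * (G (h i) * \<rho> * adj (G (h i))) $$ (b,d)"
          unfolding e by simp
        moreover have "p i * (cf (h i) * cf (h i)) = 1"
          unfolding p_def cf_def using mp by (simp add: power2_eq_square[symmetric] power_divide less_imp_le)
        ultimately show "(G (h i) * \<rho> * adj (G (h i))) $$ (b,d) = of_real (p i) * (U i * \<rho> * adj (U i)) $$ (b,d)"
          by simp
      qed
      also have "\<dots> = mixed_unitary n m p U \<rho> $$ (b,d)"
        unfolding mixed_unitary_def using b d by simp
      finally show "kmap n {..<m} (\<lambda>i. G (h i)) \<rho> $$ (b,d) = mixed_unitary n m p U \<rho> $$ (b,d)" .
    qed (auto simp: mixed_unitary_def)
    finally show "E \<rho> = mixed_unitary n m p U \<rho>" .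
  qed
  have c4: "\<forall>i<m. \<forall>j<m. i \<noteq> j \<longrightarrow> P * adj (U i) * U j * P = 0\<^sub>m n n"
  proof (intro allI impI)
    fix i j assume i: "i < m" and j: "j < m" and ij: "i \<noteq> j"
    have hN: "h i < N" "h j < N" using hS[OF i] hS[OF j] unfolding Sp_def by auto
    have aU: "adj (U i) \<in> carrier_mat n n" using Uc[OF i] by simp
    have "P * adj (U i) * U j * P = (adj P * adj (U i)) * (U j * P)"
      using assoc4[OF Pc aU Uc[OF j] Pc] Ph by simp
    also have "\<dots> = adj (V (h i)) * V (h j)"
      using UP[OF i] UP[OF j] adj_mult[OF Uc[OF i] Pc] by simp
    also have "\<dots> = 0\<^sub>m n n"
      using adjVV[OF hN] hinj[OF i j ij] Pc by (intro eq_matI) auto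
    finally show "P * adj (U i) * U j * P = 0\<^sub>m n n" .
  qed
  show ?thesis using c1 c2 c3 c4 Uu by blast
qed



lemma kmap_lin_sum:
  assumes x: "x < n" and y: "y < n"
  shows "kmap n S K (mat n n (\<lambda>(a,b). \<Sum>j<m. c j * Y j $$ (a,b))) $$ (x,y)
       = (\<Sum>j<m. c j * kmap n S K (Y j) $$ (x,y))"
proof -
  have "kmap n S K (mat n n (\<lambda>(a,b). \<Sum>j<m. c j * Y j $$ (a,b))) $$ (x,y)
      = (\<Sum>a<n. \<Sum>b<n. (\<Sum>j<m. c j * Y j $$ (a,b)) * choi S K x a y b)"
    unfolding kmap_alt[OF x y] by (intro sum.cong refl) simp
  also have "\<dots> = (\<Sum>a<n. \<Sum>b<n. \<Sum>j<m. c j * (Y j $$ (a,b) * choi S K x a y b))"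
    by (simp add: sum_distrib_right sum_distrib_left ac_simps)
  also have "\<dots> = (\<Sum>j<m. \<Sum>a<n. \<Sum>b<n. c j * (Y j $$ (a,b) * choi S K x a y b))"
    by (rule swap3)
  also have "\<dots> = (\<Sum>j<m. c j * kmap n S K (Y j) $$ (x,y))"
    unfolding kmap_alt[OF x y] by (simp add: sum_distrib_left ac_simps)
  finally show ?thesis .
qed

lemma backward:
  assumes P: "orth_proj n P" and Q: "quantum_channel n E"
    and p1: "(\<Sum>i<m. p i) = 1" and Uu: "\<forall>i<m. unitary_mat n (U i)"
    and EU: "\<forall>\<rho> \<in> carrier_mat n n. \<rho> = P * \<rho> * P \<longrightarrow> E \<rho> = mixed_unitary n m p U \<rho>"
    and orth: "\<forall>i<m. \<forall>j<m. i \<noteq> j \<longrightarrow> P * adj (U i) * U j * P = 0\<^sub>m n n"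
  shows "correctable n E P"
proof -
  have Pc: "P \<in> carrier_mat n n" and PP: "P * P = P" and Ph: "adj P = P"
    using P unfolding orth_proj_def by auto
  have Uc: "U i \<in> carrier_mat n n" and UU: "adj (U i) * U i = 1\<^sub>m n" if "i < m" for i
    using Uu that unfolding unitary_mat_def by auto
  define W where "W i = U i * P" for i
  have Wc: "W i \<in> carrier_mat n n" if "i < m" for i using Uc[OF that] Pc unfolding W_def by simp
  have aW: "adj (W i) = P * adj (U i)" if "i < m" for i
    unfolding W_def using adj_mult[OF Uc[OF that] Pc] Ph by simp
  have WW: "adj (W i) * W j = (if i = j then P else 0\<^sub>m n n)" if i: "i < m" and j: "j < m" for i j
  proof -
    have aU: "adj (U i) \<in> carrier_mat n n" using Uc[OF i] by simp
    have "adj (W i) * W j = P * adj (U i) * U j * P"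
      using aW[OF i] assoc4[OF Pc aU Uc[OF j] Pc] unfolding W_def by simp
    moreover have "P * adj (U i) * U i * P = P"
      using UU[OF i] Pc PP aU Uc[OF i] by (simp add: assoc_mult_mat[OF Pc aU Uc[OF i]])
    ultimately show ?thesis using orth i j by auto
  qed
  have WP: "W i * P = W i" if "i < m" for i
    unfolding W_def using Uc[OF that] Pc PP by (simp add: assoc_mult_mat[OF Uc[OF that] Pc Pc])
  have Wn: "W i $$ (a,b) = (W i * P) $$ (a,b)" if "i < m" for i a b using WP[OF that] by simp
  define Q where "Q = mat n n (\<lambda>(a,b). \<Sum>i<m. \<Sum>z<n. W i $$ (a,z) * cnj (W i $$ (b,z)))"
  have Qc: "Q \<in> carrier_mat n n" unfolding Q_def by simp
  have Qh: "cnj (Q $$ (a,b)) = Q $$ (b,a)" if "a < n" "b < n" for a b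
    unfolding Q_def using that by (simp add: cnj_sum mult.commute)
  have WWe: "(\<Sum>c<n. cnj (W i $$ (c,z)) * W j $$ (c,y)) = (if i = j then P $$ (z,y) else 0)"
    if "i < m" "j < m" "z < n" "y < n" for i j z y
  proof -
    have "(adj (W i) * W j) $$ (z,y) = (\<Sum>c<n. cnj (W i $$ (c,z)) * W j $$ (c,y))"
      using mult_ent[OF adj_carrier[OF Wc[OF that(1)]] Wc[OF that(2)] that(3,4)] that Wc[OF that(1)] by simp
    then show ?thesis using WW[OF that(1,2)] that by auto
  qed
  have QW: "(\<Sum>c<n. Q $$ (a,c) * W j $$ (c,y)) = W j $$ (a,y)" if j: "j < m" and a: "a < n" and y: "y < n" for j a y
  proof -
    have "(\<Sum>c<n. Q $$ (a,c) * W j $$ (c,y)) = (\<Sum>c<n. \<Sum>i<m. \<Sum>z<n. W i $$ (a,z) * (cnj (W i $$ (c,z)) * W j $$ (c,y)))"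
      unfolding Q_def using a by (intro sum.cong refl) (simp add: sum_distrib_left sum_distrib_right ac_simps)
    also have "\<dots> = (\<Sum>i<m. \<Sum>z<n. \<Sum>c<n. W i $$ (a,z) * (cnj (W i $$ (c,z)) * W j $$ (c,y)))"
      by (rule swap_in)
    also have "\<dots> = (\<Sum>i<m. \<Sum>z<n. W i $$ (a,z) * (if i = j then P $$ (z,y) else 0))"
      using WWe j y by (simp add: sum_distrib_left[symmetric])
    also have "\<dots> = (\<Sum>i<m. if i = j then (\<Sum>z<n. W j $$ (a,z) * P $$ (z,y)) else 0)"
      by (intro sum.cong refl) auto
    also have "\<dots> = (\<Sum>z<n. W j $$ (a,z) * P $$ (z,y))"
      using j by simp
    also have "\<dots> = W j $$ (a,y)" using mult_ent[OF Wc[OF j] Pc a y] Wn[OF j] by simp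
    finally show ?thesis .
  qed
  have QQ: "(\<Sum>c<n. Q $$ (a,c) * Q $$ (c,b)) = Q $$ (a,b)" if a: "a < n" and b: "b < n" for a b
  proof -
    have "(\<Sum>c<n. Q $$ (a,c) * Q $$ (c,b)) = (\<Sum>c<n. \<Sum>i<m. \<Sum>z<n. W i $$ (a,z) * (cnj (W i $$ (c,z)) * Q $$ (c,b)))"
      unfolding Q_def using a by (intro sum.cong refl) (simp add: sum_distrib_left sum_distrib_right ac_simps)
    also have "\<dots> = (\<Sum>i<m. \<Sum>z<n. \<Sum>c<n. W i $$ (a,z) * (cnj (W i $$ (c,z)) * Q $$ (c,b)))"
      by (rule swap_in)
    also have "\<dots> = (\<Sum>i<m. \<Sum>z<n. W i $$ (a,z) * cnj (\<Sum>c<n. Q $$ (b,c) * W i $$ (c,z)))"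
      using Qh b by (simp add: sum_distrib_left cnj_sum ac_simps)
    also have "\<dots> = (\<Sum>i<m. \<Sum>z<n. W i $$ (a,z) * cnj (W i $$ (b,z)))"
      using QW b by simp
    also have "\<dots> = Q $$ (a,b)" unfolding Q_def using a b by simp
    finally show ?thesis .
  qed
  define D where "D a b = (if a = b then 1 else 0) - Q $$ (a,b)" for a b
  have DD: "(\<Sum>b<n. cnj (D b a) * D b c) = D a c" if a: "a < n" and c: "c < n" for a c
  proof -
    have "(\<Sum>b<n. cnj (D b a) * D b c)
       = (\<Sum>b<n. (if a = b then 1 else 0) * (if b = c then 1 else 0) - (if a = b then 1 else 0) * Q $$ (b,c)
            - Q $$ (a,b) * (if b = c then 1 else 0) + Q $$ (a,b) * Q $$ (b,c))"
      unfolding D_def using Qh a by (intro sum.cong refl) (auto simp: algebra_simps)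
    also have "\<dots> = (if a = c then 1 else 0) - Q $$ (a,c) - Q $$ (a,c) + Q $$ (a,c)"
    proof -
      have h: "Q $$ (a,b) * (if b = c then 1 else 0) = (if b = c then Q $$ (a,c) else 0)" for b by simp
      show ?thesis
        using a c QQ[OF a c] by (simp add: h sum.distrib sum_subtractf if_distrib[of "\<lambda>t. t * _"] cong: if_cong)
    qed
    finally show ?thesis unfolding D_def by simp
  qed
  define T where "T b = mat n n (\<lambda>(x,y). if x = 0 then D b y else 0)" for b
  define KR where "KR k = (if k < m then adj (W k) else T (k - m))" for k
  have KRc: "KR k \<in> carrier_mat n n" if "k < m + n" for k
    unfolding KR_def T_def using Wc by auto
  have tp: "kraus_tp n {..<m+n} KR"
    unfolding kraus_tp_def
  proof (intro allI impI)
    fix a c assume a: "a < n" and c: "c < n"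
    have "(\<Sum>k<m+n. \<Sum>b<n. cnj (KR k $$ (b,a)) * KR k $$ (b,c))
       = (\<Sum>k<m. \<Sum>b<n. cnj (KR k $$ (b,a)) * KR k $$ (b,c))
         + (\<Sum>k<n. \<Sum>b<n. cnj (KR (m+k) $$ (b,a)) * KR (m+k) $$ (b,c))"
      using sum_split_at[of m "m+n"] by simp
    also have "(\<Sum>k<m. \<Sum>b<n. cnj (KR k $$ (b,a)) * KR k $$ (b,c)) = Q $$ (a,c)"
    proof -
      have "(\<Sum>k<m. \<Sum>b<n. cnj (KR k $$ (b,a)) * KR k $$ (b,c)) = (\<Sum>k<m. \<Sum>b<n. W k $$ (a,b) * cnj (W k $$ (c,b)))"
      proof (intro sum.cong refl)
        fix k b assume k: "k \<in> {..<m}" and b: "b \<in> {..<n}"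
        have "W k \<in> carrier_mat n n" using Wc k by simp
        then show "cnj (KR k $$ (b,a)) * KR k $$ (b,c) = W k $$ (a,b) * cnj (W k $$ (c,b))"
          unfolding KR_def using k b a c by (simp add: mult.commute)
      qed
      then show ?thesis unfolding Q_def using a c by simp
    qed
    also have "(\<Sum>k<n. \<Sum>b<n. cnj (KR (m+k) $$ (b,a)) * KR (m+k) $$ (b,c)) = (\<Sum>k<n. cnj (D k a) * D k c)"
    proof (intro sum.cong refl)
      fix k assume k: "k \<in> {..<n}"
      then have n0: "0 < n" by auto
      have "(\<Sum>b<n. cnj (KR (m+k) $$ (b,a)) * KR (m+k) $$ (b,c)) = (\<Sum>b<n. if b = 0 then cnj (D k a) * D k c else 0)"
        unfolding KR_def T_def using a c by (intro sum.cong refl) auto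
      also have "\<dots> = cnj (D k a) * D k c" using n0 by simp
      finally show "(\<Sum>b<n. cnj (KR (m+k) $$ (b,a)) * KR (m+k) $$ (b,c)) = cnj (D k a) * D k c" .
    qed
    also have "\<dots> = D a c" by (rule DD[OF a c])
    finally show "(\<Sum>k<m+n. \<Sum>b<n. cnj (KR k $$ (b,a)) * KR k $$ (b,c)) = (if a = c then 1 else 0)"
      unfolding D_def by simp
  qed
  define R where "R = kmap n {..<m+n} KR"
  have Rch: "quantum_channel n R" unfolding R_def by (rule kmap_channel[OF tp])
  have KW: "KR k * W j = (if k = j then P else 0\<^sub>m n n)" if k: "k < m + n" and j: "j < m" for k j
  proof (cases "k < m")
    case True
    then show ?thesis unfolding KR_def using WW[OF True j] by simp
  next
    case False
    define b where "b = k - m"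
    have b: "b < n" using k False unfolding b_def by simp
    have "T b * W j = 0\<^sub>m n n"
    proof (rule eq_matI)
      fix x y assume "x < dim_row (0\<^sub>m n n :: complex mat)" "y < dim_col (0\<^sub>m n n :: complex mat)"
      then have x: "x < n" and y: "y < n" by auto
      have Tc: "T b \<in> carrier_mat n n" unfolding T_def by simp
      have "(T b * W j) $$ (x,y) = (\<Sum>z<n. T b $$ (x,z) * W j $$ (z,y))"
        using mult_ent[OF Tc Wc[OF j] x y] .
      also have "\<dots> = (if x = 0 then (\<Sum>z<n. D b z * W j $$ (z,y)) else 0)"
        unfolding T_def using x by (auto intro!: sum.neutral)
      also have "(\<Sum>z<n. D b z * W j $$ (z,y)) = W j $$ (b,y) - (\<Sum>z<n. Q $$ (b,z) * W j $$ (z,y))"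
        unfolding D_def using b by (simp add: algebra_simps sum_subtractf if_distrib[of "\<lambda>t. t * _"] cong: if_cong)
      also have "\<dots> = 0" using QW[OF j b y] by simp
      finally show "(T b * W j) $$ (x,y) = 0\<^sub>m n n $$ (x,y)" using x y by simp
    qed (use Wc[OF j] in \<open>auto simp: T_def\<close>)
    then show ?thesis unfolding KR_def using False j b_def by auto
  qed
  have main: "R (E (P * \<rho> * P)) = P * \<rho> * P" if rc: "\<rho> \<in> carrier_mat n n" for \<rho>
  proof -
    define \<sigma> where "\<sigma> = P * \<rho> * P"
    have sc: "\<sigma> \<in> carrier_mat n n" unfolding \<sigma>_def using Pc rc by simp
    have sP: "\<sigma> = P * \<sigma> * P"
      unfolding \<sigma>_def using assoc5[OF Pc Pc rc Pc Pc] PP by simp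
    have Es: "E \<sigma> = mixed_unitary n m p U \<sigma>" using EU sc sP by blast
    have Ys: "U j * \<sigma> * adj (U j) = W j * \<rho> * adj (W j)" if j: "j < m" for j
    proof -
      have aU: "adj (U j) \<in> carrier_mat n n" using Uc[OF j] by simp
      have "U j * \<sigma> * adj (U j) = (U j * P) * \<rho> * (P * adj (U j))"
        unfolding \<sigma>_def using assoc5[OF Uc[OF j] Pc rc Pc aU] .
      then show ?thesis using aW[OF j] unfolding W_def by simp
    qed
    have Kj: "kmap n {..<m+n} KR (U j * \<sigma> * adj (U j)) = P * \<rho> * P" if j: "j < m" for j
    proof -
      have "kmap n {..<m+n} KR (U j * \<sigma> * adj (U j)) = kmap n {..<m+n} (\<lambda>k. KR k * W j) \<rho>"
        unfolding Ys[OF j] by (rule kmap_sandwich[OF _ _ Wc[OF j] rc]) (use KRc in auto)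
      also have "\<dots> = kmap n {()} (\<lambda>_. P) \<rho>"
      proof (rule kmap_choi_eq)
        fix b a d c assume badc: "b < n" "a < n" "d < n" "c < n"
        have "choi {..<m+n} (\<lambda>k. KR k * W j) b a d c
            = (\<Sum>k<m+n. if k = j then P $$ (b,a) * cnj (P $$ (d,c)) else 0)"
          unfolding choi_def using KW j badc by (intro sum.cong refl) auto
        also have "\<dots> = P $$ (b,a) * cnj (P $$ (d,c))" using j by simp
        finally show "choi {..<m+n} (\<lambda>k. KR k * W j) b a d c = choi {()} (\<lambda>_. P) b a d c"
          unfolding choi_def by simp
      qed
      also have "\<dots> = P * \<rho> * adj P" by (rule kmap_single[OF Pc rc])
      finally show ?thesis using Ph by simp
    qed
    show ?thesis
    proof (rule eq_matI)
      fix x y assume "x < dim_row (P * \<rho> * P)" "y < dim_col (P * \<rho> * P)"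
      then have x: "x < n" and y: "y < n" using Pc rc by auto
      have "R (E \<sigma>) $$ (x,y) = (\<Sum>j<m. of_real (p j) * kmap n {..<m+n} KR (U j * \<sigma> * adj (U j)) $$ (x,y))"
        unfolding R_def Es mixed_unitary_def by (rule kmap_lin_sum[OF x y])
      also have "\<dots> = (\<Sum>j<m. of_real (p j) * (P * \<rho> * P) $$ (x,y))"
        using Kj by simp
      also have "\<dots> = of_real (\<Sum>j<m. p j) * (P * \<rho> * P) $$ (x,y)"
        by (simp add: sum_distrib_right)
      finally show "R (E (P * \<rho> * P)) $$ (x,y) = (P * \<rho> * P) $$ (x,y)"
        using p1 unfolding \<sigma>_def by simp
    qed (use Rch Pc rc in \<open>auto simp: R_def\<close>)
  qed
  show ?thesis unfolding correctable_def using Rch main by blast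
qed



lemma forward_zero:
  assumes Q: "quantum_channel n E" and Pz: "P = 0\<^sub>m n n"
  shows "\<exists>(m::nat) (p::nat \<Rightarrow> real) (U::nat \<Rightarrow> complex mat).
       (\<forall>i<m. 0 \<le> p i) \<and> (\<Sum>i<m. p i) = 1 \<and> (\<forall>i<m. unitary_mat n (U i)) \<and>
       (\<forall>\<rho> \<in> carrier_mat n n. \<rho> = P * \<rho> * P \<longrightarrow> E \<rho> = mixed_unitary n m p U \<rho>) \<and>
       (\<forall>i<m. \<forall>j<m. i \<noteq> j \<longrightarrow> P * adj (U i) * U j * P = 0\<^sub>m n n)"
proof (intro exI[of _ "1::nat"] exI[of _ "\<lambda>_. 1::real"] exI[of _ "\<lambda>_. 1\<^sub>m n"] conjI allI impI ballI)
  show "unitary_mat n (1\<^sub>m n)" unfolding unitary_mat_def adj_one by simp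
  fix \<rho> assume rc: "\<rho> \<in> carrier_mat n n" and rP: "\<rho> = P * \<rho> * P"
  have r0: "\<rho> = 0\<^sub>m n n" using rP rc Pz by simp
  have "E \<rho> = 0\<^sub>m n n" using lin_zero[of n E] Q r0 unfolding quantum_channel_def by simp
  moreover have "mixed_unitary n 1 (\<lambda>_. 1) (\<lambda>_. 1\<^sub>m n) \<rho> = 0\<^sub>m n n"
    unfolding mixed_unitary_def r0 by (rule eq_matI) (auto simp: adj_one)
  ultimately show "E \<rho> = mixed_unitary n 1 (\<lambda>_. 1) (\<lambda>_. 1\<^sub>m n) \<rho>" by simp
qed auto

theorem lemma1:
  fixes n :: nat and E :: "complex mat \<Rightarrow> complex mat" and P :: "complex mat"
  assumes "quantum_channel n E" and "orth_proj n P"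
  shows "correctable n E P \<longleftrightarrow>
    (\<exists>(m::nat) (p::nat \<Rightarrow> real) (U::nat \<Rightarrow> complex mat).
       (\<forall>i<m. 0 \<le> p i) \<and> (\<Sum>i<m. p i) = 1 \<and> (\<forall>i<m. unitary_mat n (U i)) \<and>
       (\<forall>\<rho> \<in> carrier_mat n n. \<rho> = P * \<rho> * P \<longrightarrow> E \<rho> = mixed_unitary n m p U \<rho>) \<and>
       (\<forall>i<m. \<forall>j<m. i \<noteq> j \<longrightarrow> P * adj (U i) * U j * P = 0\<^sub>m n n))"
proof
  assume c: "correctable n E P"
  show "\<exists>(m::nat) (p::nat \<Rightarrow> real) (U::nat \<Rightarrow> complex mat).
       (\<forall>i<m. 0 \<le> p i) \<and> (\<Sum>i<m. p i) = 1 \<and> (\<forall>i<m. unitary_mat n (U i)) \<and>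
       (\<forall>\<rho> \<in> carrier_mat n n. \<rho> = P * \<rho> * P \<longrightarrow> E \<rho> = mixed_unitary n m p U \<rho>) \<and>
       (\<forall>i<m. \<forall>j<m. i \<noteq> j \<longrightarrow> P * adj (U i) * U j * P = 0\<^sub>m n n)"
  proof (cases "P = 0\<^sub>m n n")
    case True
    then show ?thesis by (rule forward_zero[OF assms(1)])
  next
    case False
    then show ?thesis by (rule forward_main[OF assms c])
  qed
next
  assume "\<exists>(m::nat) (p::nat \<Rightarrow> real) (U::nat \<Rightarrow> complex mat).
       (\<forall>i<m. 0 \<le> p i) \<and> (\<Sum>i<m. p i) = 1 \<and> (\<forall>i<m. unitary_mat n (U i)) \<and>
       (\<forall>\<rho> \<in> carrier_mat n n. \<rho> = P * \<rho> * P \<longrightarrow> E \<rho> = mixed_unitary n m p U \<rho>) \<and>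
       (\<forall>i<m. \<forall>j<m. i \<noteq> j \<longrightarrow> P * adj (U i) * U j * P = 0\<^sub>m n n)"
  then show "correctable n E P"
    by (elim exE conjE) (rule backward[OF assms(2) assms(1)])
qed

end
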